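(* Let $Q$ be a commutative automorphic loop of nilpotency class $3$. Then for all $a,b,c,d\in Q$: \begin{align*} (ab,c,d)=&(a,c,d)(b,c,d)((a,c,d),a,b)((b,c,d),b,a)\\&\cdot((a,c,d),b,c)((b,c,d),a,c)((a,c,d),b,d)((b,c,d),a,d),\\ (a,b,cd)=&(a,b,c)(a,b,d)((a,b,c),c,d)((a,b,d),d,c)\\&\cdot((a,b,c),d,b)((a,b,d),c,b)((a,b,c),d,a)((a,b,d),c,a),\\ (a,bc,d)=&(a,b,d)(a,c,d)((a,b,d),b,c)((a,c,d),c,b)\\&\cdot((a,b,d),c,a)((a,c,d),b,a)((a,b,d),c,d)((a,c,d),b,d). \end{align*}
   Context: A loop is a set with a binary operation such that all left and right translations $L_a:b\mapsto ab$, $R_a:b\mapsto ba$ are bijections and there is a two-sided identity. The inner mapping group is the stabilizer of the identity in the group generated by all translations; $Q$ is automorphic if all inner mappings are automorphisms. The associator $(a,b,c)$ is defined by $(ab)c=(a(bc))(a,b,c)$; the notation $x\cdot y$ indicates lower priority of multiplication. The center $Z(Q)$ is the set of elements fixed by all inner mappings; $Z_0=1$, $Z_{i+1}(Q)$ is the preimage of $Z(Q/Z_i(Q))$, and $Q$ has nilpotency class $n$ if $Z_{n-1}(Q)\neq Q=Z_n(Q)$. In a commutative loop of nilpotency class $3$, all compounded associators (associators having an associator as one argument) are central. *)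

theory Defs
  imports "HOL-Algebra.Bij" "HOL-Algebra.Generated_Groups"
begin

definition loop :: "('a, 'b) monoid_scheme \<Rightarrow> bool" where
  "loop G \<longleftrightarrow>
     (\<forall>x \<in> carrier G. \<forall>y \<in> carrier G. x \<otimes>\<^bsub>G\<^esub> y \<in> carrier G) \<and>
     \<one>\<^bsub>G\<^esub> \<in> carrier G \<and>
     (\<forall>x \<in> carrier G. \<one>\<^bsub>G\<^esub> \<otimes>\<^bsub>G\<^esub> x = x \<and> x \<otimes>\<^bsub>G\<^esub> \<one>\<^bsub>G\<^esub> = x) \<and>
     (\<forall>a \<in> carrier G. bij_betw (\<lambda>b. a \<otimes>\<^bsub>G\<^esub> b) (carrier G) (carrier G)) \<and>
     (\<forall>a \<in> carrier G. bij_betw (\<lambda>b. b \<otimes>\<^bsub>G\<^esub> a) (carrier G) (carrier G))"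

definition commutative_loop :: "('a, 'b) monoid_scheme \<Rightarrow> bool" where
  "commutative_loop G \<longleftrightarrow> loop G \<and>
     (\<forall>x \<in> carrier G. \<forall>y \<in> carrier G. x \<otimes>\<^bsub>G\<^esub> y = y \<otimes>\<^bsub>G\<^esub> x)"

text \<open>Left and right translations, as elements of the symmetric group on the carrier.\<close>

definition ltrans :: "('a, 'b) monoid_scheme \<Rightarrow> 'a \<Rightarrow> 'a \<Rightarrow> 'a" where
  "ltrans G a = restrict (\<lambda>b. a \<otimes>\<^bsub>G\<^esub> b) (carrier G)"

definition rtrans :: "('a, 'b) monoid_scheme \<Rightarrow> 'a \<Rightarrow> 'a \<Rightarrow> 'a" where
  "rtrans G a = restrict (\<lambda>b. b \<otimes>\<^bsub>G\<^esub> a) (carrier G)"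

definition mlt :: "('a, 'b) monoid_scheme \<Rightarrow> ('a \<Rightarrow> 'a) set" where
  "mlt G = generate (BijGroup (carrier G))
             (ltrans G ` carrier G \<union> rtrans G ` carrier G)"

definition inn :: "('a, 'b) monoid_scheme \<Rightarrow> ('a \<Rightarrow> 'a) set" where
  "inn G = {f \<in> mlt G. f \<one>\<^bsub>G\<^esub> = \<one>\<^bsub>G\<^esub>}"

definition automorphic_loop :: "('a, 'b) monoid_scheme \<Rightarrow> bool" where
  "automorphic_loop G \<longleftrightarrow> loop G \<and>
     (\<forall>f \<in> inn G. \<forall>x \<in> carrier G. \<forall>y \<in> carrier G.
        f (x \<otimes>\<^bsub>G\<^esub> y) = f x \<otimes>\<^bsub>G\<^esub> f y)"

definition loop_center :: "('a, 'b) monoid_scheme \<Rightarrow> 'a set" where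
  "loop_center G = {x \<in> carrier G. \<forall>f \<in> inn G. f x = x}"

text \<open>Quotient loop by a (normal) subloop N: cosets xN, with (xN)(yN) = (xy)N.\<close>

definition lcoset :: "('a, 'b) monoid_scheme \<Rightarrow> 'a \<Rightarrow> 'a set \<Rightarrow> 'a set" where
  "lcoset G x N = (\<lambda>n. x \<otimes>\<^bsub>G\<^esub> n) ` N"

definition quot_loop :: "('a, 'b) monoid_scheme \<Rightarrow> 'a set \<Rightarrow> 'a set monoid" where
  "quot_loop G N =
     \<lparr> carrier = (\<lambda>x. lcoset G x N) ` carrier G,
       mult = (\<lambda>A B. lcoset G ((SOME a. a \<in> A) \<otimes>\<^bsub>G\<^esub> (SOME b. b \<in> B)) N),
       one = N \<rparr>"

fun upper_center :: "('a, 'b) monoid_scheme \<Rightarrow> nat \<Rightarrow> 'a set" where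
  "upper_center G 0 = {\<one>\<^bsub>G\<^esub>}"
| "upper_center G (Suc i) =
     {x \<in> carrier G. lcoset G x (upper_center G i)
                       \<in> loop_center (quot_loop G (upper_center G i))}"

definition nilpotency_class :: "('a, 'b) monoid_scheme \<Rightarrow> nat \<Rightarrow> bool" where
  "nilpotency_class G n \<longleftrightarrow>
     upper_center G n = carrier G \<and> upper_center G (n - 1) \<noteq> carrier G"

text \<open>Associator: (ab)c = (a(bc)) (a,b,c).\<close>

definition associator :: "('a, 'b) monoid_scheme \<Rightarrow> 'a \<Rightarrow> 'a \<Rightarrow> 'a \<Rightarrow> 'a" where
  "associator G a b c =
     the_inv_into (carrier G) (\<lambda>u. (a \<otimes>\<^bsub>G\<^esub> (b \<otimes>\<^bsub>G\<^esub> c)) \<otimes>\<^bsub>G\<^esub> u)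
       ((a \<otimes>\<^bsub>G\<^esub> b) \<otimes>\<^bsub>G\<^esub> c)"

end

theory Submission
  imports Defs
begin

locale lp =
  fixes G :: "('a, 'b) monoid_scheme" (structure)
  assumes lp: "loop G"
begin

lemma closed[simp,intro]: "x \<in> carrier G \<Longrightarrow> y \<in> carrier G \<Longrightarrow> x \<otimes> y \<in> carrier G"
  using lp unfolding loop_def by blast
lemma one_closed[simp,intro]: "\<one> \<in> carrier G"
  using lp unfolding loop_def by blast
lemma l_one[simp]: "x \<in> carrier G \<Longrightarrow> \<one> \<otimes> x = x"
  using lp unfolding loop_def by blast
lemma r_one[simp]: "x \<in> carrier G \<Longrightarrow> x \<otimes> \<one> = x"
  using lp unfolding loop_def by blast
lemma bijL: "a \<in> carrier G \<Longrightarrow> bij_betw (\<lambda>b. a \<otimes> b) (carrier G) (carrier G)"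
  using lp unfolding loop_def by blast
lemma bijR: "a \<in> carrier G \<Longrightarrow> bij_betw (\<lambda>b. b \<otimes> a) (carrier G) (carrier G)"
proof -
  assume a: "a \<in> carrier G"
  have "\<forall>a\<in>carrier G. bij_betw (\<lambda>b. b \<otimes> a) (carrier G) (carrier G)"
    using lp unfolding loop_def by (elim conjE) assumption
  then show ?thesis using a by (rule bspec)
qed

lemma lcancel: "a \<in> carrier G \<Longrightarrow> x \<in> carrier G \<Longrightarrow> y \<in> carrier G \<Longrightarrow> a \<otimes> x = a \<otimes> y \<Longrightarrow> x = y"
  using bijL[of a] unfolding bij_betw_def by (auto dest: inj_onD)
lemma rcancel: "a \<in> carrier G \<Longrightarrow> x \<in> carrier G \<Longrightarrow> y \<in> carrier G \<Longrightarrow> x \<otimes> a = y \<otimes> a \<Longrightarrow> x = y"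
  using bijR[of a] unfolding bij_betw_def by (auto dest: inj_onD)

definition ldiv where "ldiv a y = the_inv_into (carrier G) (\<lambda>u. a \<otimes> u) y"
definition rdiv where "rdiv y a = the_inv_into (carrier G) (\<lambda>u. u \<otimes> a) y"

lemma ldiv: assumes "a \<in> carrier G" "y \<in> carrier G"
  shows "ldiv a y \<in> carrier G" "a \<otimes> ldiv a y = y"
proof -
  have b: "bij_betw (\<lambda>b. a \<otimes> b) (carrier G) (carrier G)" using bijL assms by blast
  then have "y \<in> (\<lambda>b. a \<otimes> b) ` carrier G" using assms unfolding bij_betw_def by blast
  then show "ldiv a y \<in> carrier G" "a \<otimes> ldiv a y = y"
    unfolding ldiv_def using b
    by (auto simp: bij_betw_def intro: the_inv_into_into f_the_inv_into_f)
qed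

lemma ldiv_eq: "a \<in> carrier G \<Longrightarrow> u \<in> carrier G \<Longrightarrow> a \<otimes> u = y \<Longrightarrow> ldiv a y = u"
  using lcancel[of a "ldiv a y" u] ldiv[of a y] by auto

lemma rdiv: assumes "a \<in> carrier G" "y \<in> carrier G"
  shows "rdiv y a \<in> carrier G" "rdiv y a \<otimes> a = y"
proof -
  have b: "bij_betw (\<lambda>b. b \<otimes> a) (carrier G) (carrier G)" using bijR assms by blast
  then have "y \<in> (\<lambda>b. b \<otimes> a) ` carrier G" using assms unfolding bij_betw_def by blast
  then show "rdiv y a \<in> carrier G" "rdiv y a \<otimes> a = y"
    unfolding rdiv_def using b
    by (auto simp: bij_betw_def intro: the_inv_into_into f_the_inv_into_f)
qed

lemma rdiv_eq: "a \<in> carrier G \<Longrightarrow> u \<in> carrier G \<Longrightarrow> u \<otimes> a = y \<Longrightarrow> rdiv y a = u"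
  using rcancel[of a "rdiv y a" u] rdiv[of a y] by auto

lemma assoc_def': "associator G a b c = ldiv (a \<otimes> (b \<otimes> c)) ((a \<otimes> b) \<otimes> c)"
  unfolding associator_def ldiv_def by simp

lemma assoc: assumes "a \<in> carrier G" "b \<in> carrier G" "c \<in> carrier G"
  shows "associator G a b c \<in> carrier G" "(a \<otimes> (b \<otimes> c)) \<otimes> associator G a b c = (a \<otimes> b) \<otimes> c"
  using ldiv[of "a \<otimes> (b \<otimes> c)" "(a \<otimes> b) \<otimes> c"] assms by (auto simp: assoc_def')

lemma assoc_eq: "a \<in> carrier G \<Longrightarrow> b \<in> carrier G \<Longrightarrow> c \<in> carrier G \<Longrightarrow> u \<in> carrier G \<Longrightarrow>
   (a \<otimes> (b \<otimes> c)) \<otimes> u = (a \<otimes> b) \<otimes> c \<Longrightarrow> associator G a b c = u"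
  by (simp add: assoc_def' ldiv_eq)

lemma assoc_closed[simp,intro]: "a \<in> carrier G \<Longrightarrow> b \<in> carrier G \<Longrightarrow> c \<in> carrier G \<Longrightarrow> associator G a b c \<in> carrier G"
  by (rule assoc(1))

abbreviation "BG \<equiv> BijGroup (carrier G)"

lemma ltrans_Bij: "a \<in> carrier G \<Longrightarrow> ltrans G a \<in> Bij (carrier G)"
  unfolding ltrans_def Bij_def using bijL[of a]
  by (auto simp: bij_betw_def inj_on_def)
lemma rtrans_Bij: "a \<in> carrier G \<Longrightarrow> rtrans G a \<in> Bij (carrier G)"
  unfolding rtrans_def Bij_def using bijR[of a]
  by (auto simp: bij_betw_def inj_on_def)

lemma carrier_BG: "carrier BG = Bij (carrier G)"
  by (simp add: BijGroup_def)

lemma gens_sub: "ltrans G ` carrier G \<union> rtrans G ` carrier G \<subseteq> carrier BG"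
  using ltrans_Bij rtrans_Bij by (auto simp only: carrier_BG)

lemma mlt_Bij: "f \<in> mlt G \<Longrightarrow> f \<in> Bij (carrier G)"
proof -
  assume "f \<in> mlt G"
  then have "f \<in> carrier BG"
    using group.generate_in_carrier[OF group_BijGroup gens_sub] unfolding mlt_def by blast
  then show ?thesis by (simp only: carrier_BG)
qed

lemma mlt_closed: "f \<in> mlt G \<Longrightarrow> x \<in> carrier G \<Longrightarrow> f x \<in> carrier G"
  using mlt_Bij Bij_imp_funcset by blast

lemma inn_closed: "f \<in> inn G \<Longrightarrow> x \<in> carrier G \<Longrightarrow> f x \<in> carrier G"
  using mlt_closed unfolding inn_def by blast

lemma inn_one: "f \<in> inn G \<Longrightarrow> f \<one> = \<one>"
  unfolding inn_def by blast

lemma ltrans_mlt: "a \<in> carrier G \<Longrightarrow> ltrans G a \<in> mlt G"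
  unfolding mlt_def by (rule generate.incl) auto
lemma rtrans_mlt: "a \<in> carrier G \<Longrightarrow> rtrans G a \<in> mlt G"
  unfolding mlt_def by (rule generate.incl) auto

lemma inv_ltrans_mlt: "a \<in> carrier G \<Longrightarrow> inv\<^bsub>BG\<^esub> (ltrans G a) \<in> mlt G"
  unfolding mlt_def by (rule generate.inv) auto
lemma inv_rtrans_mlt: "a \<in> carrier G \<Longrightarrow> inv\<^bsub>BG\<^esub> (rtrans G a) \<in> mlt G"
  unfolding mlt_def by (rule generate.inv) auto

lemma comp_mlt: "f \<in> mlt G \<Longrightarrow> g \<in> mlt G \<Longrightarrow> compose (carrier G) f g \<in> mlt G"
proof -
  assume f: "f \<in> mlt G" and g: "g \<in> mlt G"
  have "f \<otimes>\<^bsub>BG\<^esub> g \<in> mlt G" using f g unfolding mlt_def by (rule generate.eng)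
  moreover have "f \<otimes>\<^bsub>BG\<^esub> g = compose (carrier G) f g"
    using mlt_Bij[OF f] mlt_Bij[OF g] by (simp add: BijGroup_def)
  ultimately show ?thesis by simp
qed

lemma inv_ltrans_eq: assumes a: "a \<in> carrier G" and y: "y \<in> carrier G"
  shows "(inv\<^bsub>BG\<^esub> (ltrans G a)) y = ldiv a y"
proof -
  have "inv\<^bsub>BG\<^esub> (ltrans G a) = (\<lambda>x \<in> carrier G. inv_into (carrier G) (ltrans G a) x)"
    using inv_BijGroup ltrans_Bij a by blast
  moreover have "inv_into (carrier G) (ltrans G a) y = ldiv a y"
    apply (rule inv_into_f_eq)
    using ltrans_Bij[OF a] ldiv[OF a y] by (auto simp: Bij_def bij_betw_def ltrans_def)
  ultimately show ?thesis using y by simp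
qed

lemma inv_rtrans_eq: assumes a: "a \<in> carrier G" and y: "y \<in> carrier G"
  shows "(inv\<^bsub>BG\<^esub> (rtrans G a)) y = rdiv y a"
proof -
  have "inv\<^bsub>BG\<^esub> (rtrans G a) = (\<lambda>x \<in> carrier G. inv_into (carrier G) (rtrans G a) x)"
    using inv_BijGroup rtrans_Bij a by blast
  moreover have "inv_into (carrier G) (rtrans G a) y = rdiv y a"
    apply (rule inv_into_f_eq)
    using rtrans_Bij[OF a] rdiv[OF a y] by (auto simp: Bij_def bij_betw_def rtrans_def)
  ultimately show ?thesis using y by simp
qed

lemma inn_L: assumes x: "x \<in> carrier G" and y: "y \<in> carrier G"
  shows "\<exists>f\<in>inn G. \<forall>u\<in>carrier G. f u = ldiv (x \<otimes> y) (x \<otimes> (y \<otimes> u))"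
proof -
  let ?f = "compose (carrier G) (inv\<^bsub>BG\<^esub> (ltrans G (x \<otimes> y)))
              (compose (carrier G) (ltrans G x) (ltrans G y))"
  have m: "?f \<in> mlt G" using x y
    by (intro comp_mlt inv_ltrans_mlt ltrans_mlt) auto
  have v: "\<forall>u\<in>carrier G. ?f u = ldiv (x \<otimes> y) (x \<otimes> (y \<otimes> u))"
    using x y by (simp add: compose_def ltrans_def[of G x] ltrans_def[of G y] inv_ltrans_eq)
  have "?f \<one> = \<one>" using v x y by (auto intro: ldiv_eq)
  then show ?thesis using m v unfolding inn_def by blast
qed

lemma inn_R: assumes x: "x \<in> carrier G" and y: "y \<in> carrier G"
  shows "\<exists>f\<in>inn G. \<forall>u\<in>carrier G. f u = rdiv ((u \<otimes> x) \<otimes> y) (x \<otimes> y)"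
proof -
  let ?f = "compose (carrier G) (inv\<^bsub>BG\<^esub> (rtrans G (x \<otimes> y)))
              (compose (carrier G) (rtrans G y) (rtrans G x))"
  have m: "?f \<in> mlt G" using x y
    by (intro comp_mlt inv_rtrans_mlt rtrans_mlt) auto
  have v: "\<forall>u\<in>carrier G. ?f u = rdiv ((u \<otimes> x) \<otimes> y) (x \<otimes> y)"
    using x y by (simp add: compose_def rtrans_def[of G x] rtrans_def[of G y] inv_rtrans_eq)
  have "?f \<one> = \<one>" using v x y by (auto intro: rdiv_eq)
  then show ?thesis using m v unfolding inn_def by blast
qed

lemma inn_T: assumes x: "x \<in> carrier G"
  shows "\<exists>f\<in>inn G. \<forall>u\<in>carrier G. f u = rdiv (x \<otimes> u) x"
proof -
  let ?f = "compose (carrier G) (inv\<^bsub>BG\<^esub> (rtrans G x)) (ltrans G x)"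
  have m: "?f \<in> mlt G" using x
    by (intro comp_mlt inv_rtrans_mlt ltrans_mlt) auto
  have v: "\<forall>u\<in>carrier G. ?f u = rdiv (x \<otimes> u) x"
    using x by (simp add: compose_def ltrans_def[of G x] inv_rtrans_eq)
  have "?f \<one> = \<one>" using v x by (auto intro: rdiv_eq)
  then show ?thesis using m v unfolding inn_def by blast
qed

definition NC where "NC = {z \<in> carrier G. \<forall>a\<in>carrier G. \<forall>b\<in>carrier G.
   a \<otimes> z = z \<otimes> a \<and> (a \<otimes> b) \<otimes> z = a \<otimes> (b \<otimes> z) \<and> (z \<otimes> a) \<otimes> b = z \<otimes> (a \<otimes> b)
   \<and> (a \<otimes> z) \<otimes> b = a \<otimes> (z \<otimes> b)}"

lemma NC_c: "z \<in> NC \<Longrightarrow> z \<in> carrier G" unfolding NC_def by blast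
lemma NC_1: "z \<in> NC \<Longrightarrow> a \<in> carrier G \<Longrightarrow> a \<otimes> z = z \<otimes> a" unfolding NC_def by blast
lemma NC_2: "z \<in> NC \<Longrightarrow> a \<in> carrier G \<Longrightarrow> b \<in> carrier G \<Longrightarrow> (a \<otimes> b) \<otimes> z = a \<otimes> (b \<otimes> z)" unfolding NC_def by blast
lemma NC_3: "z \<in> NC \<Longrightarrow> a \<in> carrier G \<Longrightarrow> b \<in> carrier G \<Longrightarrow> (z \<otimes> a) \<otimes> b = z \<otimes> (a \<otimes> b)" unfolding NC_def by blast
lemma NC_4: "z \<in> NC \<Longrightarrow> a \<in> carrier G \<Longrightarrow> b \<in> carrier G \<Longrightarrow> (a \<otimes> z) \<otimes> b = a \<otimes> (z \<otimes> b)" unfolding NC_def by blast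

lemma center_sub_NC: "loop_center G \<subseteq> NC"
proof
  fix z assume z: "z \<in> loop_center G"
  then have zc: "z \<in> carrier G" and fz: "\<And>f. f \<in> inn G \<Longrightarrow> f z = z"
    unfolding loop_center_def by auto
  have c1: "a \<otimes> z = z \<otimes> a" if a: "a \<in> carrier G" for a
  proof -
    obtain f where f: "f \<in> inn G" and fv: "\<forall>u\<in>carrier G. f u = rdiv (a \<otimes> u) a" using inn_T a by blast
    have "rdiv (a \<otimes> z) a = f z" using fv zc by simp
    then have "rdiv (a \<otimes> z) a = z" using fz[OF f] by simp
    then have "z \<otimes> a = a \<otimes> z" using rdiv(2)[OF a closed[OF a zc]] by simp
    then show ?thesis by simp
  qed
  have c2: "(a \<otimes> b) \<otimes> z = a \<otimes> (b \<otimes> z)" if a: "a \<in> carrier G" and b: "b \<in> carrier G" for a b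
  proof -
    obtain f where f: "f \<in> inn G" and fv: "\<forall>u\<in>carrier G. f u = ldiv (a \<otimes> b) (a \<otimes> (b \<otimes> u))" using inn_L a b by blast
    have "ldiv (a \<otimes> b) (a \<otimes> (b \<otimes> z)) = f z" using fv zc by simp
    then have "ldiv (a \<otimes> b) (a \<otimes> (b \<otimes> z)) = z" using fz[OF f] by simp
    then show ?thesis using ldiv(2)[OF closed[OF a b] closed[OF a closed[OF b zc]]] by simp
  qed
  have c3: "(z \<otimes> a) \<otimes> b = z \<otimes> (a \<otimes> b)" if a: "a \<in> carrier G" and b: "b \<in> carrier G" for a b
  proof -
    obtain f where f: "f \<in> inn G" and fv: "\<forall>u\<in>carrier G. f u = rdiv ((u \<otimes> a) \<otimes> b) (a \<otimes> b)" using inn_R a b by blast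
    have "rdiv ((z \<otimes> a) \<otimes> b) (a \<otimes> b) = f z" using fv zc by simp
    then have "rdiv ((z \<otimes> a) \<otimes> b) (a \<otimes> b) = z" using fz[OF f] by simp
    then show ?thesis using rdiv(2)[OF closed[OF a b] closed[OF closed[OF zc a] b]] by simp
  qed
  have c4: "(a \<otimes> z) \<otimes> b = a \<otimes> (z \<otimes> b)" if a: "a \<in> carrier G" and b: "b \<in> carrier G" for a b
  proof -
    have "(a \<otimes> z) \<otimes> b = (z \<otimes> a) \<otimes> b" using c1[OF a] by simp
    also have "\<dots> = z \<otimes> (a \<otimes> b)" using c3[OF a b] .
    finally have 1: "(a \<otimes> z) \<otimes> b = z \<otimes> (a \<otimes> b)" .
    have "a \<otimes> (z \<otimes> b) = a \<otimes> (b \<otimes> z)" using c1[OF b] by simp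
    also have "\<dots> = (a \<otimes> b) \<otimes> z" using c2[OF a b] by simp
    also have "\<dots> = z \<otimes> (a \<otimes> b)" using c1[OF closed[OF a b]] .
    finally have "a \<otimes> (z \<otimes> b) = z \<otimes> (a \<otimes> b)" .
    with 1 show ?thesis by simp
  qed
  show "z \<in> NC" unfolding NC_def
  proof (intro CollectI conjI ballI)
    show "z \<in> carrier G" by (fact zc)
    fix a b assume a: "a \<in> carrier G" and b: "b \<in> carrier G"
    show "a \<otimes> z = z \<otimes> a" by (fact c1[OF a])
    show "(a \<otimes> b) \<otimes> z = a \<otimes> (b \<otimes> z)" by (fact c2[OF a b])
    show "(z \<otimes> a) \<otimes> b = z \<otimes> (a \<otimes> b)" by (fact c3[OF a b])
    show "(a \<otimes> z) \<otimes> b = a \<otimes> (z \<otimes> b)" by (fact c4[OF a b])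
  qed
qed

lemma one_BG: "\<one>\<^bsub>BG\<^esub> = (\<lambda>x\<in>carrier G. x)"
  by (simp add: BijGroup_def)

lemma mult_BG: "f \<in> Bij (carrier G) \<Longrightarrow> g \<in> Bij (carrier G) \<Longrightarrow> f \<otimes>\<^bsub>BG\<^esub> g = compose (carrier G) f g"
  by (simp add: BijGroup_def)

lemma NC_mlt: assumes z: "z \<in> NC" and g: "g \<in> mlt G"
  shows "\<forall>y\<in>carrier G. g (y \<otimes> z) = g y \<otimes> z"
proof -
  have zc: "z \<in> carrier G" using z by (rule NC_c)
  from g[unfolded mlt_def] show ?thesis
  proof (induction rule: generate.induct)
    case one
    show ?case using zc by (simp add: one_BG)
  next
    case (incl h)
    then show ?case
    proof
      assume "h \<in> ltrans G ` carrier G"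
      then obtain a where a: "a \<in> carrier G" "h = ltrans G a" by blast
      show ?thesis
      proof
        fix y assume y: "y \<in> carrier G"
        show "h (y \<otimes> z) = h y \<otimes> z" using NC_2[OF z a(1) y] zc y a by (simp add: ltrans_def)
      qed
    next
      assume "h \<in> rtrans G ` carrier G"
      then obtain a where a: "a \<in> carrier G" "h = rtrans G a" by blast
      show ?thesis
      proof
        fix y assume y: "y \<in> carrier G"
        have "(y \<otimes> z) \<otimes> a = y \<otimes> (z \<otimes> a)" using NC_4[OF z y a(1)] .
        also have "\<dots> = y \<otimes> (a \<otimes> z)" using NC_1[OF z a(1)] by simp
        also have "\<dots> = (y \<otimes> a) \<otimes> z" using NC_2[OF z y a(1)] by simp
        finally show "h (y \<otimes> z) = h y \<otimes> z" using zc y a by (simp add: rtrans_def)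
      qed
    qed
  next
    case (inv h)
    then show ?case
    proof
      assume "h \<in> ltrans G ` carrier G"
      then obtain a where a: "a \<in> carrier G" "h = ltrans G a" by blast
      show ?thesis
      proof
        fix y assume y: "y \<in> carrier G"
        have "a \<otimes> (ldiv a y \<otimes> z) = y \<otimes> z" using NC_2[OF z a(1) ldiv(1)[OF a(1) y]] ldiv[OF a(1) y] by simp
        then have "ldiv a (y \<otimes> z) = ldiv a y \<otimes> z" by (rule ldiv_eq[OF a(1) closed[OF ldiv(1)[OF a(1) y] zc]])
        then show "(inv\<^bsub>BG\<^esub> h) (y \<otimes> z) = (inv\<^bsub>BG\<^esub> h) y \<otimes> z" using a y zc by (simp add: inv_ltrans_eq)
      qed
    next
      assume "h \<in> rtrans G ` carrier G"
      then obtain a where a: "a \<in> carrier G" "h = rtrans G a" by blast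
      show ?thesis
      proof
        fix y assume y: "y \<in> carrier G"
        have r: "rdiv y a \<in> carrier G" "rdiv y a \<otimes> a = y" using rdiv[OF a(1) y] by auto
        have "(rdiv y a \<otimes> z) \<otimes> a = rdiv y a \<otimes> (z \<otimes> a)" using NC_4[OF z r(1) a(1)] .
        also have "\<dots> = rdiv y a \<otimes> (a \<otimes> z)" using NC_1[OF z a(1)] by simp
        also have "\<dots> = y \<otimes> z" using NC_2[OF z r(1) a(1)] r(2) by simp
        finally have "rdiv (y \<otimes> z) a = rdiv y a \<otimes> z" by (rule rdiv_eq[OF a(1) closed[OF r(1) zc]])
        then show "(inv\<^bsub>BG\<^esub> h) (y \<otimes> z) = (inv\<^bsub>BG\<^esub> h) y \<otimes> z" using a y zc by (simp add: inv_rtrans_eq)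
      qed
    qed
  next
    case (eng h1 h2)
    have b1: "h1 \<in> Bij (carrier G)" and b2: "h2 \<in> Bij (carrier G)"
      using eng(1,2) mlt_Bij unfolding mlt_def by auto
    show ?case
    proof
      fix y assume y: "y \<in> carrier G"
      have h2y: "h2 y \<in> carrier G" using Bij_imp_funcset[OF b2] y by blast
      have "h1 (h2 (y \<otimes> z)) = h1 (h2 y \<otimes> z)" using eng.IH(2) y by simp
      also have "\<dots> = h1 (h2 y) \<otimes> z" using eng.IH(1) h2y by simp
      finally show "(h1 \<otimes>\<^bsub>BG\<^esub> h2) (y \<otimes> z) = (h1 \<otimes>\<^bsub>BG\<^esub> h2) y \<otimes> z"
        using mult_BG[OF b1 b2] y zc by (simp add: compose_def)
    qed
  qed
qed

lemma NC_sub_center: "NC \<subseteq> loop_center G"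
proof
  fix z assume z: "z \<in> NC"
  have zc: "z \<in> carrier G" using z by (rule NC_c)
  have "f z = z" if f: "f \<in> inn G" for f
  proof -
    have "f \<in> mlt G" "f \<one> = \<one>" using f inn_def by auto
    then show ?thesis using NC_mlt[OF z] zc by (metis l_one one_closed)
  qed
  then show "z \<in> loop_center G" unfolding loop_center_def using zc by blast
qed

lemma center_eq: "loop_center G = NC"
  using center_sub_NC NC_sub_center by blast

lemma NC_mult: assumes z: "z \<in> NC" and w: "w \<in> NC" shows "z \<otimes> w \<in> NC"
proof -
  have zc: "z \<in> carrier G" and wc: "w \<in> carrier G" using z w by (auto intro: NC_c)
  have i: "a \<otimes> (z \<otimes> w) = (z \<otimes> w) \<otimes> a" if a: "a \<in> carrier G" for a
  proof -
    have "a \<otimes> (z \<otimes> w) = (a \<otimes> z) \<otimes> w" using NC_2[OF w a zc] by simp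
    also have "\<dots> = (z \<otimes> a) \<otimes> w" using NC_1[OF z a] by simp
    also have "\<dots> = z \<otimes> (a \<otimes> w)" using NC_3[OF z a wc] by simp
    also have "\<dots> = z \<otimes> (w \<otimes> a)" using NC_1[OF w a] by simp
    also have "\<dots> = (z \<otimes> w) \<otimes> a" using NC_4[OF w zc a] by simp
    finally show ?thesis .
  qed
  have ii: "(a \<otimes> b) \<otimes> (z \<otimes> w) = a \<otimes> (b \<otimes> (z \<otimes> w))" if a: "a \<in> carrier G" and b: "b \<in> carrier G" for a b
  proof -
    have "(a \<otimes> b) \<otimes> (z \<otimes> w) = ((a \<otimes> b) \<otimes> z) \<otimes> w" using NC_2[OF w closed[OF a b] zc] by simp
    also have "\<dots> = (a \<otimes> (b \<otimes> z)) \<otimes> w" using NC_2[OF z a b] by simp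
    also have "\<dots> = a \<otimes> ((b \<otimes> z) \<otimes> w)" using NC_2[OF w a closed[OF b zc]] by simp
    also have "\<dots> = a \<otimes> (b \<otimes> (z \<otimes> w))" using NC_2[OF w b zc] by simp
    finally show ?thesis .
  qed
  have iii: "((z \<otimes> w) \<otimes> a) \<otimes> b = (z \<otimes> w) \<otimes> (a \<otimes> b)" if a: "a \<in> carrier G" and b: "b \<in> carrier G" for a b
  proof -
    have "((z \<otimes> w) \<otimes> a) \<otimes> b = (z \<otimes> (w \<otimes> a)) \<otimes> b" using NC_4[OF w zc a] by simp
    also have "\<dots> = z \<otimes> ((w \<otimes> a) \<otimes> b)" using NC_3[OF z closed[OF wc a] b] by simp
    also have "\<dots> = z \<otimes> (w \<otimes> (a \<otimes> b))" using NC_3[OF w a b] by simp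
    also have "\<dots> = (z \<otimes> w) \<otimes> (a \<otimes> b)" using NC_4[OF w zc closed[OF a b]] by simp
    finally show ?thesis .
  qed
  show ?thesis unfolding NC_def
  proof (intro CollectI conjI ballI)
    show "z \<otimes> w \<in> carrier G" using zc wc by simp
    fix a b assume a: "a \<in> carrier G" and b: "b \<in> carrier G"
    show "a \<otimes> (z \<otimes> w) = z \<otimes> w \<otimes> a" using i[OF a] .
    show "a \<otimes> b \<otimes> (z \<otimes> w) = a \<otimes> (b \<otimes> (z \<otimes> w))" using ii[OF a b] .
    show "z \<otimes> w \<otimes> a \<otimes> b = z \<otimes> w \<otimes> (a \<otimes> b)" using iii[OF a b] .
    have "a \<otimes> (z \<otimes> w) \<otimes> b = (z \<otimes> w) \<otimes> (a \<otimes> b)" using i[OF a] iii[OF a b] by simp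
    moreover have "a \<otimes> (z \<otimes> w \<otimes> b) = (z \<otimes> w) \<otimes> (a \<otimes> b)"
    proof -
      have "a \<otimes> (z \<otimes> w \<otimes> b) = a \<otimes> (b \<otimes> (z \<otimes> w))" using i[OF b] by simp
      also have "\<dots> = (a \<otimes> b) \<otimes> (z \<otimes> w)" using ii[OF a b] by simp
      also have "\<dots> = (z \<otimes> w) \<otimes> (a \<otimes> b)" using i[OF closed[OF a b]] .
      finally show ?thesis .
    qed
    ultimately show "a \<otimes> (z \<otimes> w) \<otimes> b = a \<otimes> (z \<otimes> w \<otimes> b)" by simp
  qed
qed

lemma NC_inv: assumes z: "z \<in> NC" and w: "w \<in> carrier G" and e: "z \<otimes> w = \<one>" shows "w \<in> NC"
proof -
  have zc: "z \<in> carrier G" using z by (rule NC_c)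
  have "f w = w" if f: "f \<in> inn G" for f
  proof -
    have fm: "f \<in> mlt G" "f \<one> = \<one>" using f inn_def by auto
    have "w \<otimes> z = \<one>" using NC_1[OF z w] e by simp
    then have "f w \<otimes> z = w \<otimes> z" using NC_mlt[OF z fm(1)] w fm(2) by metis
    then show ?thesis using rcancel[OF zc] mlt_closed[OF fm(1) w] w by blast
  qed
  then have "w \<in> loop_center G" unfolding loop_center_def using w by blast
  then show ?thesis using center_eq by simp
qed

end


locale qt = lp +
  fixes N :: "'a set"
  assumes N_sub: "N \<subseteq> carrier G" and N_one: "\<one> \<in> N"
  and Q1: "\<lbrakk>x \<in> carrier G; n \<in> N; m \<in> N\<rbrakk> \<Longrightarrow> \<exists>k\<in>N. (x \<otimes> n) \<otimes> m = x \<otimes> k"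
  and Q2: "\<lbrakk>x \<in> carrier G; n \<in> N\<rbrakk> \<Longrightarrow> \<exists>k\<in>N. x = (x \<otimes> n) \<otimes> k"
  and Q3: "\<lbrakk>x \<in> carrier G; y \<in> carrier G; n \<in> N; m \<in> N\<rbrakk> \<Longrightarrow> \<exists>k\<in>N. (x \<otimes> n) \<otimes> (y \<otimes> m) = (x \<otimes> y) \<otimes> k"
  and Q4: "\<lbrakk>x \<in> carrier G; y \<in> carrier G; y' \<in> carrier G; k \<in> N; x \<otimes> y = (x \<otimes> y') \<otimes> k\<rbrakk> \<Longrightarrow> \<exists>k'\<in>N. y = y' \<otimes> k'"
  and Q5: "\<lbrakk>x \<in> carrier G; y \<in> carrier G; y' \<in> carrier G; k \<in> N; y \<otimes> x = (y' \<otimes> x) \<otimes> k\<rbrakk> \<Longrightarrow> \<exists>k'\<in>N. y = y' \<otimes> k'"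
begin

abbreviation "C x \<equiv> lcoset G x N"
abbreviation "QL \<equiv> quot_loop G N"

lemma Nc: "n \<in> N \<Longrightarrow> n \<in> carrier G" using N_sub by blast

lemma mem_coset: "u \<in> C x \<longleftrightarrow> (\<exists>n\<in>N. u = x \<otimes> n)"
  unfolding lcoset_def by blast

lemma self_coset: "x \<in> carrier G \<Longrightarrow> x \<in> C x"
  unfolding mem_coset using N_one by (intro bexI[of _ \<one>]) auto

lemma coset_eq_iff: assumes x: "x \<in> carrier G" and y: "y \<in> carrier G"
  shows "C x = C y \<longleftrightarrow> (\<exists>n\<in>N. y = x \<otimes> n)"
proof
  assume "C x = C y"
  then have "y \<in> C x" using self_coset[OF y] by simp
  then show "\<exists>n\<in>N. y = x \<otimes> n" unfolding mem_coset .
next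
  assume "\<exists>n\<in>N. y = x \<otimes> n"
  then obtain n where n: "n \<in> N" "y = x \<otimes> n" by blast
  show "C x = C y"
  proof
    show "C y \<subseteq> C x"
    proof
      fix u assume "u \<in> C y"
      then obtain m where m: "m \<in> N" "u = y \<otimes> m" unfolding mem_coset by blast
      obtain k where "k \<in> N" "(x \<otimes> n) \<otimes> m = x \<otimes> k" using Q1[OF x n(1) m(1)] by blast
      then show "u \<in> C x" unfolding mem_coset using m n by auto
    qed
    show "C x \<subseteq> C y"
    proof
      fix u assume "u \<in> C x"
      then obtain m where m: "m \<in> N" "u = x \<otimes> m" unfolding mem_coset by blast
      obtain k where k: "k \<in> N" "x = (x \<otimes> n) \<otimes> k" using Q2[OF x n(1)] by blast
      obtain k' where k': "k' \<in> N" "(y \<otimes> k) \<otimes> m = y \<otimes> k'" using Q1[OF y k(1) m(1)] by blast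
      have "u = (y \<otimes> k) \<otimes> m" using m(2) k(2) n(2) by simp
      then show "u \<in> C y" unfolding mem_coset using k' by auto
    qed
  qed
qed

lemma qcarrier: "carrier QL = C ` carrier G"
  by (simp add: quot_loop_def)

lemma qone: "\<one>\<^bsub>QL\<^esub> = C \<one>"
proof -
  have "C \<one> = N" unfolding lcoset_def using N_sub by force
  then show ?thesis by (simp add: quot_loop_def)
qed

lemma qmult: assumes x: "x \<in> carrier G" and y: "y \<in> carrier G"
  shows "C x \<otimes>\<^bsub>QL\<^esub> C y = C (x \<otimes> y)"
proof -
  define a where "a = (SOME a. a \<in> C x)"
  define b where "b = (SOME b. b \<in> C y)"
  have "a \<in> C x" unfolding a_def using self_coset[OF x] by (rule someI)
  then obtain n where n: "n \<in> N" "a = x \<otimes> n" unfolding mem_coset by blast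
  have "b \<in> C y" unfolding b_def using self_coset[OF y] by (rule someI)
  then obtain m where m: "m \<in> N" "b = y \<otimes> m" unfolding mem_coset by blast
  obtain k where k: "k \<in> N" "(x \<otimes> n) \<otimes> (y \<otimes> m) = (x \<otimes> y) \<otimes> k" using Q3[OF x y n(1) m(1)] by blast
  have ab: "a \<otimes> b \<in> carrier G" using n m x y Nc by simp
  have "C (x \<otimes> y) = C (a \<otimes> b)"
    using coset_eq_iff[OF closed[OF x y] ab] k n m by auto
  moreover have "C x \<otimes>\<^bsub>QL\<^esub> C y = C (a \<otimes> b)" unfolding a_def b_def by (simp add: quot_loop_def)
  ultimately show ?thesis by simp
qed

lemma quot_loop: "loop QL"
  unfolding loop_def
proof (intro conjI ballI)
  fix X Y assume X: "X \<in> carrier QL" and Y: "Y \<in> carrier QL"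
  then obtain x y where "x \<in> carrier G" "y \<in> carrier G" "X = C x" "Y = C y" unfolding qcarrier by blast
  then show "X \<otimes>\<^bsub>QL\<^esub> Y \<in> carrier QL" by (simp add: qmult qcarrier)
next
  show "\<one>\<^bsub>QL\<^esub> \<in> carrier QL" by (simp add: qone qcarrier)
next
  fix X assume X: "X \<in> carrier QL"
  then obtain x where x: "x \<in> carrier G" "X = C x" unfolding qcarrier by blast
  show "\<one>\<^bsub>QL\<^esub> \<otimes>\<^bsub>QL\<^esub> X = X" using x by (simp add: qone qmult)
  show "X \<otimes>\<^bsub>QL\<^esub> \<one>\<^bsub>QL\<^esub> = X" using x by (simp add: qone qmult)
  show "bij_betw (\<lambda>B. X \<otimes>\<^bsub>QL\<^esub> B) (carrier QL) (carrier QL)"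
    unfolding bij_betw_def
  proof
    show "inj_on (\<lambda>B. X \<otimes>\<^bsub>QL\<^esub> B) (carrier QL)"
    proof (rule inj_onI)
      fix Y Y' assume Y: "Y \<in> carrier QL" and Y': "Y' \<in> carrier QL" and e: "X \<otimes>\<^bsub>QL\<^esub> Y = X \<otimes>\<^bsub>QL\<^esub> Y'"
      obtain y where y: "y \<in> carrier G" "Y = C y" using Y unfolding qcarrier by blast
      obtain y' where y': "y' \<in> carrier G" "Y' = C y'" using Y' unfolding qcarrier by blast
      have "C (x \<otimes> y) = C (x \<otimes> y')" using e x y y' by (simp add: qmult)
      then obtain n where n: "n \<in> N" "x \<otimes> y' = (x \<otimes> y) \<otimes> n"
        using coset_eq_iff[OF closed[OF x(1) y(1)] closed[OF x(1) y'(1)]] by blast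
      obtain k where "k \<in> N" "y' = y \<otimes> k" using Q4[OF x(1) y'(1) y(1) n] by blast
      then show "Y = Y'" using y y' coset_eq_iff by auto
    qed
    show "(\<lambda>B. X \<otimes>\<^bsub>QL\<^esub> B) ` carrier QL = carrier QL"
    proof
      show "(\<lambda>B. X \<otimes>\<^bsub>QL\<^esub> B) ` carrier QL \<subseteq> carrier QL"
        using x by (auto simp: qcarrier qmult)
      show "carrier QL \<subseteq> (\<lambda>B. X \<otimes>\<^bsub>QL\<^esub> B) ` carrier QL"
      proof
        fix W assume "W \<in> carrier QL"
        then obtain w where w: "w \<in> carrier G" "W = C w" unfolding qcarrier by blast
        have "W = X \<otimes>\<^bsub>QL\<^esub> C (ldiv x w)" using x w ldiv[OF x(1) w(1)] by (simp add: qmult)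
        moreover have "C (ldiv x w) \<in> carrier QL" using ldiv[OF x(1) w(1)] by (simp add: qcarrier)
        ultimately show "W \<in> (\<lambda>B. X \<otimes>\<^bsub>QL\<^esub> B) ` carrier QL" by blast
      qed
    qed
  qed
  show "bij_betw (\<lambda>B. B \<otimes>\<^bsub>QL\<^esub> X) (carrier QL) (carrier QL)"
    unfolding bij_betw_def
  proof
    show "inj_on (\<lambda>B. B \<otimes>\<^bsub>QL\<^esub> X) (carrier QL)"
    proof (rule inj_onI)
      fix Y Y' assume Y: "Y \<in> carrier QL" and Y': "Y' \<in> carrier QL" and e: "Y \<otimes>\<^bsub>QL\<^esub> X = Y' \<otimes>\<^bsub>QL\<^esub> X"
      obtain y where y: "y \<in> carrier G" "Y = C y" using Y unfolding qcarrier by blast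
      obtain y' where y': "y' \<in> carrier G" "Y' = C y'" using Y' unfolding qcarrier by blast
      have "C (y \<otimes> x) = C (y' \<otimes> x)" using e x y y' by (simp add: qmult)
      then obtain n where n: "n \<in> N" "y' \<otimes> x = (y \<otimes> x) \<otimes> n"
        using coset_eq_iff[OF closed[OF y(1) x(1)] closed[OF y'(1) x(1)]] by blast
      obtain k where "k \<in> N" "y' = y \<otimes> k" using Q5[OF x(1) y'(1) y(1) n] by blast
      then show "Y = Y'" using y y' coset_eq_iff by auto
    qed
    show "(\<lambda>B. B \<otimes>\<^bsub>QL\<^esub> X) ` carrier QL = carrier QL"
    proof
      show "(\<lambda>B. B \<otimes>\<^bsub>QL\<^esub> X) ` carrier QL \<subseteq> carrier QL"
        using x by (auto simp: qcarrier qmult)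
      show "carrier QL \<subseteq> (\<lambda>B. B \<otimes>\<^bsub>QL\<^esub> X) ` carrier QL"
      proof
        fix W assume "W \<in> carrier QL"
        then obtain w where w: "w \<in> carrier G" "W = C w" unfolding qcarrier by blast
        have "W = C (rdiv w x) \<otimes>\<^bsub>QL\<^esub> X" using x w rdiv[OF x(1) w(1)] by (simp add: qmult)
        moreover have "C (rdiv w x) \<in> carrier QL" using rdiv[OF x(1) w(1)] by (simp add: qcarrier)
        ultimately show "W \<in> (\<lambda>B. B \<otimes>\<^bsub>QL\<^esub> X) ` carrier QL" by blast
      qed
    qed
  qed
qed

sublocale Q: lp QL by (rule lp.intro, rule quot_loop)

definition "Zq = {x \<in> carrier G. C x \<in> loop_center QL}"

lemma assoc_N_iff: assumes a: "a \<in> carrier G" and b: "b \<in> carrier G" and c: "c \<in> carrier G"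
  shows "C ((a \<otimes> b) \<otimes> c) = C (a \<otimes> (b \<otimes> c)) \<longleftrightarrow> associator G a b c \<in> N"
proof -
  have "C ((a \<otimes> b) \<otimes> c) = C (a \<otimes> (b \<otimes> c)) \<longleftrightarrow> C (a \<otimes> (b \<otimes> c)) = C ((a \<otimes> b) \<otimes> c)" by auto
  also have "\<dots> \<longleftrightarrow> (\<exists>n\<in>N. (a \<otimes> b) \<otimes> c = (a \<otimes> (b \<otimes> c)) \<otimes> n)"
    using a b c by (intro coset_eq_iff) auto
  also have "\<dots> \<longleftrightarrow> associator G a b c \<in> N"
  proof
    assume "\<exists>n\<in>N. (a \<otimes> b) \<otimes> c = (a \<otimes> (b \<otimes> c)) \<otimes> n"
    then obtain n where n: "n \<in> N" "(a \<otimes> b) \<otimes> c = (a \<otimes> (b \<otimes> c)) \<otimes> n" by blast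
    have "associator G a b c = n" using assoc_eq[OF a b c Nc[OF n(1)]] n(2) by simp
    then show "associator G a b c \<in> N" using n by simp
  next
    assume "associator G a b c \<in> N"
    then show "\<exists>n\<in>N. (a \<otimes> b) \<otimes> c = (a \<otimes> (b \<otimes> c)) \<otimes> n" using assoc(2)[OF a b c] by metis
  qed
  finally show ?thesis .
qed

lemma Zq_iff: "x \<in> Zq \<longleftrightarrow> x \<in> carrier G \<and> (\<forall>a\<in>carrier G. \<forall>b\<in>carrier G.
   (\<exists>n\<in>N. x \<otimes> a = (a \<otimes> x) \<otimes> n) \<and> associator G a b x \<in> N \<and> associator G x a b \<in> N \<and> associator G a x b \<in> N)"
proof (cases "x \<in> carrier G")
  case False then show ?thesis unfolding Zq_def by simp
next
  case x: True
  have "C x \<in> loop_center QL \<longleftrightarrow> C x \<in> Q.NC" using Q.center_eq by simp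
  also have "\<dots> \<longleftrightarrow> (\<forall>a\<in>carrier G. \<forall>b\<in>carrier G.
      C a \<otimes>\<^bsub>QL\<^esub> C x = C x \<otimes>\<^bsub>QL\<^esub> C a \<and>
      (C a \<otimes>\<^bsub>QL\<^esub> C b) \<otimes>\<^bsub>QL\<^esub> C x = C a \<otimes>\<^bsub>QL\<^esub> (C b \<otimes>\<^bsub>QL\<^esub> C x) \<and>
      (C x \<otimes>\<^bsub>QL\<^esub> C a) \<otimes>\<^bsub>QL\<^esub> C b = C x \<otimes>\<^bsub>QL\<^esub> (C a \<otimes>\<^bsub>QL\<^esub> C b) \<and>
      (C a \<otimes>\<^bsub>QL\<^esub> C x) \<otimes>\<^bsub>QL\<^esub> C b = C a \<otimes>\<^bsub>QL\<^esub> (C x \<otimes>\<^bsub>QL\<^esub> C b))"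
    unfolding Q.NC_def qcarrier using x by blast
  also have "\<dots> \<longleftrightarrow> (\<forall>a\<in>carrier G. \<forall>b\<in>carrier G.
      C (a \<otimes> x) = C (x \<otimes> a) \<and> C ((a \<otimes> b) \<otimes> x) = C (a \<otimes> (b \<otimes> x)) \<and>
      C ((x \<otimes> a) \<otimes> b) = C (x \<otimes> (a \<otimes> b)) \<and> C ((a \<otimes> x) \<otimes> b) = C (a \<otimes> (x \<otimes> b)))"
    using x by (simp add: qmult)
  also have "\<dots> \<longleftrightarrow> (\<forall>a\<in>carrier G. \<forall>b\<in>carrier G.
   C (a \<otimes> x) = C (x \<otimes> a) \<and> associator G a b x \<in> N \<and> associator G x a b \<in> N \<and> associator G a x b \<in> N)"
    using x by (simp add: assoc_N_iff)
  also have "\<dots> \<longleftrightarrow> (\<forall>a\<in>carrier G. \<forall>b\<in>carrier G.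
   (\<exists>n\<in>N. x \<otimes> a = (a \<otimes> x) \<otimes> n) \<and> associator G a b x \<in> N \<and> associator G x a b \<in> N \<and> associator G a x b \<in> N)"
    using x by (intro ball_cong[OF refl] conj_cong[OF _ refl] coset_eq_iff) auto
  finally show ?thesis unfolding Zq_def using x by simp
qed

lemma Zq_c: "x \<in> Zq \<Longrightarrow> x \<in> carrier G" unfolding Zq_def by blast
lemma Zq_a1: "x \<in> Zq \<Longrightarrow> a \<in> carrier G \<Longrightarrow> b \<in> carrier G \<Longrightarrow> associator G a b x \<in> N"
  unfolding Zq_iff by blast
lemma Zq_a2: "x \<in> Zq \<Longrightarrow> a \<in> carrier G \<Longrightarrow> b \<in> carrier G \<Longrightarrow> associator G x a b \<in> N"
  unfolding Zq_iff by blast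
lemma Zq_a3: "x \<in> Zq \<Longrightarrow> a \<in> carrier G \<Longrightarrow> b \<in> carrier G \<Longrightarrow> associator G a x b \<in> N"
  unfolding Zq_iff by blast

lemma Zq_mult: assumes x: "x \<in> Zq" and y: "y \<in> Zq" shows "x \<otimes> y \<in> Zq"
proof -
  have xc: "x \<in> carrier G" and yc: "y \<in> carrier G" using x y Zq_c by auto
  have "C x \<in> Q.NC" "C y \<in> Q.NC" using x y Q.center_eq unfolding Zq_def by auto
  then have "C x \<otimes>\<^bsub>QL\<^esub> C y \<in> Q.NC" by (rule Q.NC_mult)
  then have "C (x \<otimes> y) \<in> loop_center QL" using Q.center_eq xc yc by (simp add: qmult)
  then show ?thesis unfolding Zq_def using xc yc by simp
qed

lemma Zq_inv: assumes x: "x \<in> Zq" and w: "w \<in> carrier G" and e: "x \<otimes> w = \<one>" shows "w \<in> Zq"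
proof -
  have xc: "x \<in> carrier G" using x Zq_c by auto
  have "C x \<in> Q.NC" using x Q.center_eq unfolding Zq_def by auto
  moreover have "C w \<in> carrier QL" using w by (simp add: qcarrier)
  moreover have "C x \<otimes>\<^bsub>QL\<^esub> C w = \<one>\<^bsub>QL\<^esub>" using xc w e by (simp add: qmult qone)
  ultimately have "C w \<in> Q.NC" by (rule Q.NC_inv)
  then show ?thesis unfolding Zq_def using w Q.center_eq by simp
qed

lemma N_Zq: assumes n: "n \<in> N" shows "n \<in> Zq"
proof -
  have nc: "n \<in> carrier G" by (rule Nc[OF n])
  have "\<exists>m\<in>N. n = \<one> \<otimes> m" using n nc by (intro bexI[of _ n]) simp_all
  then have "C \<one> = C n" using coset_eq_iff[OF one_closed nc] by blast
  then have "C n = C \<one>" by simp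
  moreover have "C \<one> \<in> loop_center QL"
    unfolding Q.center_eq Q.NC_def by (auto simp: qone[symmetric])
  ultimately show ?thesis unfolding Zq_def using nc by simp
qed

end


context lp begin

lemma G3: assumes x: "x \<in> carrier G" and y: "y \<in> carrier G" and n: "n \<in> NC" and m: "m \<in> NC"
  shows "(x \<otimes> n) \<otimes> (y \<otimes> m) = (x \<otimes> y) \<otimes> (n \<otimes> m)"
proof -
  have nc: "n \<in> carrier G" and mc: "m \<in> carrier G" using n m NC_c by auto
  have "(x \<otimes> n) \<otimes> (y \<otimes> m) = ((x \<otimes> n) \<otimes> y) \<otimes> m" using NC_2[OF m closed[OF x nc] y] by simp
  also have "(x \<otimes> n) \<otimes> y = x \<otimes> (n \<otimes> y)" using NC_4[OF n x y] .
  also have "n \<otimes> y = y \<otimes> n" using NC_1[OF n y] by simp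
  also have "x \<otimes> (y \<otimes> n) = (x \<otimes> y) \<otimes> n" using NC_2[OF n x y] by simp
  also have "((x \<otimes> y) \<otimes> n) \<otimes> m = (x \<otimes> y) \<otimes> (n \<otimes> m)" using NC_2[OF m closed[OF x y] nc] .
  finally show ?thesis .
qed

lemma G4: assumes x: "x \<in> carrier G" and y: "y \<in> carrier G" and y': "y' \<in> carrier G" and k: "k \<in> NC"
  and e: "x \<otimes> y = (x \<otimes> y') \<otimes> k" shows "y = y' \<otimes> k"
proof -
  have kc: "k \<in> carrier G" using k NC_c by auto
  have "x \<otimes> y = x \<otimes> (y' \<otimes> k)" using e NC_2[OF k x y'] by simp
  then show ?thesis using lcancel[OF x y closed[OF y' kc]] by simp
qed

lemma G5: assumes x: "x \<in> carrier G" and y: "y \<in> carrier G" and y': "y' \<in> carrier G" and k: "k \<in> NC"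
  and e: "y \<otimes> x = (y' \<otimes> x) \<otimes> k" shows "y = y' \<otimes> k"
proof -
  have kc: "k \<in> carrier G" using k NC_c by auto
  have "(y' \<otimes> x) \<otimes> k = y' \<otimes> (x \<otimes> k)" using NC_2[OF k y' x] .
  also have "x \<otimes> k = k \<otimes> x" using NC_1[OF k x] .
  also have "y' \<otimes> (k \<otimes> x) = (y' \<otimes> k) \<otimes> x" using NC_4[OF k y' x] by simp
  finally have "y \<otimes> x = (y' \<otimes> k) \<otimes> x" using e by simp
  then show ?thesis using rcancel[OF x y closed[OF y' kc]] by simp
qed

end

locale cal = lp Q for Q (structure) +
  assumes comm: "x \<in> carrier Q \<Longrightarrow> y \<in> carrier Q \<Longrightarrow> x \<otimes> y = y \<otimes> x"
  and aut: "f \<in> inn Q \<Longrightarrow> x \<in> carrier Q \<Longrightarrow> y \<in> carrier Q \<Longrightarrow> f (x \<otimes> y) = f x \<otimes> f y"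
  and nil: "upper_center Q 3 = carrier Q"
begin

interpretation Q1: qt Q "{\<one>}"
proof
  show "{\<one>} \<subseteq> carrier Q" by simp
  show "\<one> \<in> {\<one>}" by simp
  fix x n m assume x: "x \<in> carrier Q" and n: "n \<in> {\<one>}" and m: "m \<in> {\<one>}"
  then show "\<exists>k\<in>{\<one>}. (x \<otimes> n) \<otimes> m = x \<otimes> k" by simp
next
  fix x n assume x: "x \<in> carrier Q" and n: "n \<in> {\<one>}"
  then show "\<exists>k\<in>{\<one>}. x = (x \<otimes> n) \<otimes> k" by simp
next
  fix x y n m assume "x \<in> carrier Q" "y \<in> carrier Q" "n \<in> {\<one>}" "m \<in> {\<one>}"
  then show "\<exists>k\<in>{\<one>}. (x \<otimes> n) \<otimes> (y \<otimes> m) = (x \<otimes> y) \<otimes> k" by simp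
next
  fix x y y' k assume "x \<in> carrier Q" "y \<in> carrier Q" "y' \<in> carrier Q" "k \<in> {\<one>}" "x \<otimes> y = (x \<otimes> y') \<otimes> k"
  then have "y = y'" using lcancel[of x y y'] by simp
  then show "\<exists>k'\<in>{\<one>}. y = y' \<otimes> k'" using \<open>y' \<in> carrier Q\<close> by simp
next
  fix x y y' k assume "x \<in> carrier Q" "y \<in> carrier Q" "y' \<in> carrier Q" "k \<in> {\<one>}" "y \<otimes> x = (y' \<otimes> x) \<otimes> k"
  then have "y = y'" using rcancel[of x y y'] by simp
  then show "\<exists>k'\<in>{\<one>}. y = y' \<otimes> k'" using \<open>y' \<in> carrier Q\<close> by simp
qed

lemma assoc_one_iff: "a \<in> carrier Q \<Longrightarrow> b \<in> carrier Q \<Longrightarrow> c \<in> carrier Q \<Longrightarrow>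
   associator Q a b c = \<one> \<longleftrightarrow> (a \<otimes> b) \<otimes> c = a \<otimes> (b \<otimes> c)"
  using assoc(2)[of a b c] assoc_eq[of a b c \<one>] by auto

lemma Z1mem: "x \<in> Q1.Zq \<longleftrightarrow> x \<in> NC"
    proof
      assume x: "x \<in> Q1.Zq"
      then have xc: "x \<in> carrier Q" by (rule Q1.Zq_c)
      show "x \<in> NC" unfolding NC_def
      proof (intro CollectI conjI ballI)
        show "x \<in> carrier Q" by (fact xc)
        fix a b assume a: "a \<in> carrier Q" and b: "b \<in> carrier Q"
        have "\<exists>n\<in>{\<one>}. x \<otimes> a = a \<otimes> x \<otimes> n" using x a b unfolding Q1.Zq_iff by blast
        then show "a \<otimes> x = x \<otimes> a" using a xc by simp
        have "associator Q a b x = \<one>" using Q1.Zq_a1[OF x a b] by simp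
        then show "(a \<otimes> b) \<otimes> x = a \<otimes> (b \<otimes> x)" using assoc_one_iff[OF a b xc] by simp
        have "associator Q x a b = \<one>" using Q1.Zq_a2[OF x a b] by simp
        then show "(x \<otimes> a) \<otimes> b = x \<otimes> (a \<otimes> b)" using assoc_one_iff[OF xc a b] by simp
        have "associator Q a x b = \<one>" using Q1.Zq_a3[OF x a b] by simp
        then show "(a \<otimes> x) \<otimes> b = a \<otimes> (x \<otimes> b)" using assoc_one_iff[OF a xc b] by simp
      qed
    next
      assume x: "x \<in> NC"
      then have xc: "x \<in> carrier Q" by (rule NC_c)
      show "x \<in> Q1.Zq" unfolding Q1.Zq_iff
      proof (intro conjI ballI)
        show "x \<in> carrier Q" by (fact xc)
        fix a b assume a: "a \<in> carrier Q" and b: "b \<in> carrier Q"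
        show "\<exists>n\<in>{\<one>}. x \<otimes> a = a \<otimes> x \<otimes> n" using NC_1[OF x a] a xc by simp
        show "associator Q a b x \<in> {\<one>}" using NC_2[OF x a b] assoc_one_iff[OF a b xc] by simp
        show "associator Q x a b \<in> {\<one>}" using NC_3[OF x a b] assoc_one_iff[OF xc a b] by simp
        show "associator Q a x b \<in> {\<one>}" using NC_4[OF x a b] assoc_one_iff[OF a xc b] by simp
      qed
    qed

lemma Z1: "upper_center Q 1 = NC"
proof -
  have "upper_center Q 1 = Q1.Zq" unfolding Q1.Zq_def by simp
  also have "\<dots> = NC" using Z1mem by blast
  finally show ?thesis .
qed


interpretation QZ: qt Q NC
proof
  show "NC \<subseteq> carrier Q" using NC_c by blast
  show "\<one> \<in> NC" using center_eq[symmetric] unfolding loop_center_def inn_def by auto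
next
  fix x n m assume x: "x \<in> carrier Q" and n: "n \<in> NC" and m: "m \<in> NC"
  show "\<exists>k\<in>NC. (x \<otimes> n) \<otimes> m = x \<otimes> k"
    using NC_2[OF m x NC_c[OF n]] NC_mult[OF n m] by blast
next
  fix x n assume x: "x \<in> carrier Q" and n: "n \<in> NC"
  have nc: "n \<in> carrier Q" by (rule NC_c[OF n])
  have k: "ldiv n \<one> \<in> carrier Q" "n \<otimes> ldiv n \<one> = \<one>" using ldiv[OF nc one_closed] by auto
  have kN: "ldiv n \<one> \<in> NC" by (rule NC_inv[OF n k(1) k(2)])
  have "(x \<otimes> n) \<otimes> ldiv n \<one> = x" using NC_2[OF kN x nc] k x by simp
  then show "\<exists>k\<in>NC. x = (x \<otimes> n) \<otimes> k" using kN by metis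
next
  fix x y n m assume "x \<in> carrier Q" "y \<in> carrier Q" "n \<in> NC" "m \<in> NC"
  then show "\<exists>k\<in>NC. (x \<otimes> n) \<otimes> (y \<otimes> m) = (x \<otimes> y) \<otimes> k"
    using G3 NC_mult by blast
next
  fix x y y' k assume "x \<in> carrier Q" "y \<in> carrier Q" "y' \<in> carrier Q" "k \<in> NC" "x \<otimes> y = (x \<otimes> y') \<otimes> k"
  then show "\<exists>k'\<in>NC. y = y' \<otimes> k'" using G4 by blast
next
  fix x y y' k assume "x \<in> carrier Q" "y \<in> carrier Q" "y' \<in> carrier Q" "k \<in> NC" "y \<otimes> x = (y' \<otimes> x) \<otimes> k"
  then show "\<exists>k'\<in>NC. y = y' \<otimes> k'" using G5 by blast
qed

abbreviation "Z2 \<equiv> QZ.Zq"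

lemma Z2_eq: "upper_center Q 2 = Z2"
proof -
  have "upper_center Q 2 = upper_center Q (Suc 1)" by (simp only: numeral_2_eq_2 One_nat_def)
  also have "\<dots> = Z2" unfolding QZ.Zq_def upper_center.simps(2) Z1 ..
  finally show ?thesis .
qed

lemma Z2_NC: "n \<in> Z2 \<Longrightarrow> QZ.C n \<in> QZ.Q.NC"
  unfolding QZ.Zq_def using QZ.Q.center_eq by auto

lemma Cc: "x \<in> carrier Q \<Longrightarrow> QZ.C x \<in> carrier QZ.QL"
  by (simp add: QZ.qcarrier)

lemma zback: "x \<in> carrier Q \<Longrightarrow> y \<in> carrier Q \<Longrightarrow> QZ.C x = QZ.C y \<Longrightarrow> \<exists>z\<in>NC. y = x \<otimes> z"
  using QZ.coset_eq_iff by blast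

lemma Z2_c: "n \<in> Z2 \<Longrightarrow> n \<in> carrier Q" by (rule QZ.Zq_c)

lemma Z2_NCmult: "n \<in> Z2 \<Longrightarrow> z \<in> NC \<Longrightarrow> n \<otimes> z \<in> Z2"
  using QZ.Zq_mult QZ.N_Zq by blast

interpretation QZ2: qt Q Z2
proof
  show "Z2 \<subseteq> carrier Q" using Z2_c by blast
  show "\<one> \<in> Z2" using QZ.N_Zq QZ.N_one by blast
next
  fix x n m assume x: "x \<in> carrier Q" and n: "n \<in> Z2" and m: "m \<in> Z2"
  have nc: "n \<in> carrier Q" and mc: "m \<in> carrier Q" using n m Z2_c by auto
  have "QZ.C ((x \<otimes> n) \<otimes> m) = (QZ.C x \<otimes>\<^bsub>QZ.QL\<^esub> QZ.C n) \<otimes>\<^bsub>QZ.QL\<^esub> QZ.C m"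
    using x nc mc by (simp add: QZ.qmult)
  also have "\<dots> = QZ.C x \<otimes>\<^bsub>QZ.QL\<^esub> (QZ.C n \<otimes>\<^bsub>QZ.QL\<^esub> QZ.C m)"
    using QZ.Q.NC_2[OF Z2_NC[OF m] Cc[OF x] Cc[OF nc]] .
  also have "\<dots> = QZ.C (x \<otimes> (n \<otimes> m))" using x nc mc by (simp add: QZ.qmult)
  finally have e: "QZ.C ((x \<otimes> n) \<otimes> m) = QZ.C (x \<otimes> (n \<otimes> m))" .
  obtain z where z: "z \<in> NC" "(x \<otimes> n) \<otimes> m = (x \<otimes> (n \<otimes> m)) \<otimes> z"
    using zback[OF closed[OF x closed[OF nc mc]] closed[OF closed[OF x nc] mc] e[symmetric]] by blast
  have "(x \<otimes> n) \<otimes> m = x \<otimes> ((n \<otimes> m) \<otimes> z)" using z NC_2[OF z(1) x closed[OF nc mc]] by simp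
  moreover have "(n \<otimes> m) \<otimes> z \<in> Z2" using Z2_NCmult[OF QZ.Zq_mult[OF n m] z(1)] .
  ultimately show "\<exists>k\<in>Z2. (x \<otimes> n) \<otimes> m = x \<otimes> k" by blast
next
  fix x n assume x: "x \<in> carrier Q" and n: "n \<in> Z2"
  have nc: "n \<in> carrier Q" using n Z2_c by auto
  have k: "ldiv n \<one> \<in> carrier Q" "n \<otimes> ldiv n \<one> = \<one>" using ldiv[OF nc one_closed] by auto
  have kZ: "ldiv n \<one> \<in> Z2" by (rule QZ.Zq_inv[OF n k])
  let ?k = "ldiv n \<one>"
  have "QZ.C ((x \<otimes> n) \<otimes> ?k) = (QZ.C x \<otimes>\<^bsub>QZ.QL\<^esub> QZ.C n) \<otimes>\<^bsub>QZ.QL\<^esub> QZ.C ?k"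
    using x nc k by (simp add: QZ.qmult)
  also have "\<dots> = QZ.C x \<otimes>\<^bsub>QZ.QL\<^esub> (QZ.C n \<otimes>\<^bsub>QZ.QL\<^esub> QZ.C ?k)"
    using QZ.Q.NC_2[OF Z2_NC[OF kZ] Cc[OF x] Cc[OF nc]] .
  also have "\<dots> = QZ.C x" using x nc k by (simp add: QZ.qmult)
  finally have e: "QZ.C ((x \<otimes> n) \<otimes> ?k) = QZ.C x" .
  obtain z where z: "z \<in> NC" "x = ((x \<otimes> n) \<otimes> ?k) \<otimes> z"
    using zback[OF closed[OF closed[OF x nc] k(1)] x e] by blast
  have "x = (x \<otimes> n) \<otimes> (?k \<otimes> z)" using z NC_2[OF z(1) closed[OF x nc] k(1)] by simp
  moreover have "?k \<otimes> z \<in> Z2" using Z2_NCmult[OF kZ z(1)] .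
  ultimately show "\<exists>k\<in>Z2. x = (x \<otimes> n) \<otimes> k" by blast
next
  fix x y n m assume x: "x \<in> carrier Q" and y: "y \<in> carrier Q" and n: "n \<in> Z2" and m: "m \<in> Z2"
  have nc: "n \<in> carrier Q" and mc: "m \<in> carrier Q" using n m Z2_c by auto
  have "QZ.C ((x \<otimes> y) \<otimes> (n \<otimes> m)) = (QZ.C x \<otimes>\<^bsub>QZ.QL\<^esub> QZ.C y) \<otimes>\<^bsub>QZ.QL\<^esub> (QZ.C n \<otimes>\<^bsub>QZ.QL\<^esub> QZ.C m)"
    using x y nc mc by (simp add: QZ.qmult)
  also have "\<dots> = (QZ.C x \<otimes>\<^bsub>QZ.QL\<^esub> QZ.C n) \<otimes>\<^bsub>QZ.QL\<^esub> (QZ.C y \<otimes>\<^bsub>QZ.QL\<^esub> QZ.C m)"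
    using QZ.Q.G3[OF Cc[OF x] Cc[OF y] Z2_NC[OF n] Z2_NC[OF m]] by simp
  also have "\<dots> = QZ.C ((x \<otimes> n) \<otimes> (y \<otimes> m))" using x y nc mc by (simp add: QZ.qmult)
  finally have e: "QZ.C ((x \<otimes> y) \<otimes> (n \<otimes> m)) = QZ.C ((x \<otimes> n) \<otimes> (y \<otimes> m))" .
  obtain z where z: "z \<in> NC" "(x \<otimes> n) \<otimes> (y \<otimes> m) = ((x \<otimes> y) \<otimes> (n \<otimes> m)) \<otimes> z"
    using zback[OF closed[OF closed[OF x y] closed[OF nc mc]] closed[OF closed[OF x nc] closed[OF y mc]] e] by blast
  have "(x \<otimes> n) \<otimes> (y \<otimes> m) = (x \<otimes> y) \<otimes> ((n \<otimes> m) \<otimes> z)" using z NC_2[OF z(1) closed[OF x y] closed[OF nc mc]] by simp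
  moreover have "(n \<otimes> m) \<otimes> z \<in> Z2" using Z2_NCmult[OF QZ.Zq_mult[OF n m] z(1)] .
  ultimately show "\<exists>k\<in>Z2. (x \<otimes> n) \<otimes> (y \<otimes> m) = (x \<otimes> y) \<otimes> k" by blast
next
  fix x y y' k assume x: "x \<in> carrier Q" and y: "y \<in> carrier Q" and y': "y' \<in> carrier Q" and k: "k \<in> Z2"
    and e0: "x \<otimes> y = (x \<otimes> y') \<otimes> k"
  have kc: "k \<in> carrier Q" using k Z2_c by auto
  have "QZ.C x \<otimes>\<^bsub>QZ.QL\<^esub> QZ.C y = (QZ.C x \<otimes>\<^bsub>QZ.QL\<^esub> QZ.C y') \<otimes>\<^bsub>QZ.QL\<^esub> QZ.C k"
    using e0 x y y' kc by (simp add: QZ.qmult)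
  then have "QZ.C y = QZ.C y' \<otimes>\<^bsub>QZ.QL\<^esub> QZ.C k"
    by (rule QZ.Q.G4[OF Cc[OF x] Cc[OF y] Cc[OF y'] Z2_NC[OF k]])
  then have e: "QZ.C (y' \<otimes> k) = QZ.C y" using y' kc by (simp add: QZ.qmult)
  obtain z where z: "z \<in> NC" "y = (y' \<otimes> k) \<otimes> z"
    using zback[OF closed[OF y' kc] y e] by blast
  have "y = y' \<otimes> (k \<otimes> z)" using z NC_2[OF z(1) y' kc] by simp
  then show "\<exists>k'\<in>Z2. y = y' \<otimes> k'" using Z2_NCmult[OF k z(1)] by blast
next
  fix x y y' k assume x: "x \<in> carrier Q" and y: "y \<in> carrier Q" and y': "y' \<in> carrier Q" and k: "k \<in> Z2"
    and e0: "y \<otimes> x = (y' \<otimes> x) \<otimes> k"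
  have kc: "k \<in> carrier Q" using k Z2_c by auto
  have "QZ.C y \<otimes>\<^bsub>QZ.QL\<^esub> QZ.C x = (QZ.C y' \<otimes>\<^bsub>QZ.QL\<^esub> QZ.C x) \<otimes>\<^bsub>QZ.QL\<^esub> QZ.C k"
    using e0 x y y' kc by (simp add: QZ.qmult)
  then have "QZ.C y = QZ.C y' \<otimes>\<^bsub>QZ.QL\<^esub> QZ.C k"
    by (rule QZ.Q.G5[OF Cc[OF x] Cc[OF y] Cc[OF y'] Z2_NC[OF k]])
  then have e: "QZ.C (y' \<otimes> k) = QZ.C y" using y' kc by (simp add: QZ.qmult)
  obtain z where z: "z \<in> NC" "y = (y' \<otimes> k) \<otimes> z"
    using zback[OF closed[OF y' kc] y e] by blast
  have "y = y' \<otimes> (k \<otimes> z)" using z NC_2[OF z(1) y' kc] by simp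
  then show "\<exists>k'\<in>Z2. y = y' \<otimes> k'" using Z2_NCmult[OF k z(1)] by blast
qed

lemma P1: "x \<in> carrier Q \<Longrightarrow> y \<in> carrier Q \<Longrightarrow> z \<in> carrier Q \<Longrightarrow> associator Q x y z \<in> Z2"
proof -
  assume x: "x \<in> carrier Q" and y: "y \<in> carrier Q" and z: "z \<in> carrier Q"
  have "upper_center Q 3 = upper_center Q (Suc 2)" by (simp only: numeral_3_eq_3 numeral_2_eq_2)
  also have "\<dots> = QZ2.Zq" unfolding QZ2.Zq_def upper_center.simps(2) Z2_eq ..
  finally have "z \<in> QZ2.Zq" using nil z by simp
  then show ?thesis using QZ2.Zq_a1 x y by blast
qed



abbreviation as where "as x y z \<equiv> associator Q x y z"

definition ZGr :: "'a monoid" where "ZGr = \<lparr>carrier = NC, mult = mult Q, one = one Q\<rparr>"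

lemma NC_one: "\<one> \<in> NC" using QZ.N_one .

lemma ZG_cg: "comm_group ZGr"
proof (rule comm_groupI)
  fix x y z assume x: "x \<in> carrier ZGr" and y: "y \<in> carrier ZGr" and z: "z \<in> carrier ZGr"
  then have x: "x \<in> NC" and y: "y \<in> NC" and z: "z \<in> NC" by (auto simp: ZGr_def)
  show "x \<otimes>\<^bsub>ZGr\<^esub> y \<in> carrier ZGr" using NC_mult[OF x y] by (simp add: ZGr_def)
  show "x \<otimes>\<^bsub>ZGr\<^esub> y \<otimes>\<^bsub>ZGr\<^esub> z = x \<otimes>\<^bsub>ZGr\<^esub> (y \<otimes>\<^bsub>ZGr\<^esub> z)" using NC_2[OF z NC_c[OF x] NC_c[OF y]] by (simp add: ZGr_def)
  show "x \<otimes>\<^bsub>ZGr\<^esub> y = y \<otimes>\<^bsub>ZGr\<^esub> x" using comm[OF NC_c[OF x] NC_c[OF y]] by (simp add: ZGr_def)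
  show "\<one>\<^bsub>ZGr\<^esub> \<otimes>\<^bsub>ZGr\<^esub> x = x" using NC_c[OF x] by (simp add: ZGr_def)
  have i: "ldiv x \<one> \<in> carrier Q" "x \<otimes> ldiv x \<one> = \<one>" using ldiv[OF NC_c[OF x] one_closed] by auto
  have "ldiv x \<one> \<in> NC" by (rule NC_inv[OF x i])
  moreover have "ldiv x \<one> \<otimes> x = \<one>" using i comm[OF NC_c[OF x] i(1)] by simp
  ultimately show "\<exists>y\<in>carrier ZGr. y \<otimes>\<^bsub>ZGr\<^esub> x = \<one>\<^bsub>ZGr\<^esub>" by (auto simp: ZGr_def)
next
  show "\<one>\<^bsub>ZGr\<^esub> \<in> carrier ZGr" using NC_one by (simp add: ZGr_def)
qed

interpretation ZG: comm_group ZGr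
  rewrites "mult ZGr = mult Q" and "carrier ZGr = NC" and "one ZGr = one Q"
  by (rule ZG_cg) (simp_all add: ZGr_def)

lemma Z2_assoc1[intro]: "A \<in> Z2 \<Longrightarrow> x \<in> carrier Q \<Longrightarrow> y \<in> carrier Q \<Longrightarrow> as x y A \<in> NC"
  by (rule QZ.Zq_a1)
lemma Z2_assoc2[intro]: "A \<in> Z2 \<Longrightarrow> x \<in> carrier Q \<Longrightarrow> y \<in> carrier Q \<Longrightarrow> as A x y \<in> NC"
  by (rule QZ.Zq_a2)
lemma Z2_assoc3[intro]: "A \<in> Z2 \<Longrightarrow> x \<in> carrier Q \<Longrightarrow> y \<in> carrier Q \<Longrightarrow> as x A y \<in> NC"
  by (rule QZ.Zq_a3)

lemma Lhom: assumes x: "x \<in> carrier Q" and y: "y \<in> carrier Q" and u: "u \<in> carrier Q" and v: "v \<in> carrier Q"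
  and cu: "as x y u \<in> NC" and cv: "as x y v \<in> NC" and cuv: "as x y (u \<otimes> v) \<in> NC"
  shows "as x y (u \<otimes> v) = as x y u \<otimes> as x y v"
proof -
  obtain f where f: "f \<in> inn Q" and fv: "\<forall>w\<in>carrier Q. f w = ldiv (x \<otimes> y) (x \<otimes> (y \<otimes> w))"
    using inn_L[OF x y] by blast
  have key: "f w \<otimes> as x y w = w" if w: "w \<in> carrier Q" and c: "as x y w \<in> NC" for w
  proof -
    have fw: "f w \<in> carrier Q" "(x \<otimes> y) \<otimes> f w = x \<otimes> (y \<otimes> w)"
      using fv w ldiv[OF closed[OF x y] closed[OF x closed[OF y w]]] by auto
    have "(x \<otimes> y) \<otimes> (f w \<otimes> as x y w) = ((x \<otimes> y) \<otimes> f w) \<otimes> as x y w"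
      using NC_2[OF c closed[OF x y] fw(1)] by simp
    also have "\<dots> = (x \<otimes> y) \<otimes> w" using fw(2) assoc(2)[OF x y w] by simp
    finally show ?thesis using lcancel[OF closed[OF x y] closed[OF fw(1) NC_c[OF c]] w] by simp
  qed
  have fc: "f w \<in> carrier Q" if "w \<in> carrier Q" for w using inn_closed[OF f that] .
  have "f (u \<otimes> v) \<otimes> as x y (u \<otimes> v) = u \<otimes> v" using key[OF closed[OF u v] cuv] .
  also have "u \<otimes> v = (f u \<otimes> as x y u) \<otimes> (f v \<otimes> as x y v)" using key[OF u cu] key[OF v cv] by simp
  also have "\<dots> = (f u \<otimes> f v) \<otimes> (as x y u \<otimes> as x y v)" using G3[OF fc[OF u] fc[OF v] cu cv] .
  also have "f u \<otimes> f v = f (u \<otimes> v)" using aut[OF f u v] by simp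
  finally show ?thesis using lcancel[OF fc[OF closed[OF u v]] NC_c[OF cuv] NC_c[OF NC_mult[OF cu cv]]] by simp
qed

lemma Sym: assumes x: "x \<in> carrier Q" and y: "y \<in> carrier Q" and z: "z \<in> carrier Q" and c: "as x y z \<in> NC"
  shows "as z y x \<otimes> as x y z = \<one>"
proof -
  let ?P = "(x \<otimes> y) \<otimes> z"
  have "(z \<otimes> y) \<otimes> x = (z \<otimes> (y \<otimes> x)) \<otimes> as z y x" using assoc(2)[OF z y x] by simp
  moreover have "(z \<otimes> y) \<otimes> x = x \<otimes> (y \<otimes> z)" using comm[OF closed[OF z y] x] comm[OF z y] by simp
  moreover have "z \<otimes> (y \<otimes> x) = ?P" using comm[OF z closed[OF y x]] comm[OF y x] by simp
  ultimately have e1: "x \<otimes> (y \<otimes> z) = ?P \<otimes> as z y x" by simp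
  have "?P = (x \<otimes> (y \<otimes> z)) \<otimes> as x y z" using assoc(2)[OF x y z] by simp
  also have "\<dots> = (?P \<otimes> as z y x) \<otimes> as x y z" using e1 by simp
  also have "\<dots> = ?P \<otimes> (as z y x \<otimes> as x y z)" using NC_2[OF c closed[OF closed[OF x y] z] assoc_closed[OF z y x]] .
  finally have "?P \<otimes> \<one> = ?P \<otimes> (as z y x \<otimes> as x y z)" using x y z by simp
  then show ?thesis using lcancel[of ?P \<one> "as z y x \<otimes> as x y z"] x y z by simp
qed

lemma Mid: assumes x: "x \<in> carrier Q" and y: "y \<in> carrier Q" and A: "A \<in> Z2"
  shows "as x A y \<otimes> as y x A = as x y A"
proof -
  have Ac: "A \<in> carrier Q" using A Z2_c by auto
  let ?R = "x \<otimes> (y \<otimes> A)"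
  have c2: "as y x A \<in> NC" using A x y by auto
  have "(x \<otimes> A) \<otimes> y = (x \<otimes> (A \<otimes> y)) \<otimes> as x A y" using assoc(2)[OF x Ac y] by simp
  then have e1: "y \<otimes> (x \<otimes> A) = ?R \<otimes> as x A y"
    using comm[OF closed[OF x Ac] y] comm[OF Ac y] by simp
  have "(x \<otimes> y) \<otimes> A = (y \<otimes> x) \<otimes> A" using comm[OF x y] by simp
  also have "\<dots> = (y \<otimes> (x \<otimes> A)) \<otimes> as y x A" using assoc(2)[OF y x Ac] by simp
  also have "\<dots> = (?R \<otimes> as x A y) \<otimes> as y x A" using e1 by simp
  also have "\<dots> = ?R \<otimes> (as x A y \<otimes> as y x A)" using NC_2[OF c2 closed[OF x closed[OF y Ac]] assoc_closed[OF x Ac y]] .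
  finally have "?R \<otimes> as x y A = ?R \<otimes> (as x A y \<otimes> as y x A)" using assoc(2)[OF x y Ac] by simp
  then show ?thesis using lcancel[OF closed[OF x closed[OF y Ac]] assoc_closed[OF x y Ac] closed[OF assoc_closed[OF x Ac y] assoc_closed[OF y x Ac]]] by simp
qed


lemma Z2c[simp]: "A \<in> Z2 \<Longrightarrow> A \<in> carrier Q" by (rule Z2_c)

lemma L3: assumes x: "x \<in> carrier Q" and y: "y \<in> carrier Q" and A: "A \<in> Z2" and B: "B \<in> Z2"
  shows "as x y (A \<otimes> B) = as x y A \<otimes> as x y B"
  using Lhom[OF x y Z2_c[OF A] Z2_c[OF B]] QZ.Zq_mult[OF A B] A B x y by auto

lemma H1: assumes A: "A \<in> Z2" and x: "x \<in> carrier Q" and u: "u \<in> carrier Q" and v: "v \<in> carrier Q"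
  shows "as A x (u \<otimes> v) = as A x u \<otimes> as A x v"
  using Lhom[OF Z2_c[OF A] x u v] A x u v by auto

lemma H2: assumes A: "A \<in> Z2" and x: "x \<in> carrier Q" and u: "u \<in> carrier Q" and v: "v \<in> carrier Q"
  shows "as x A (u \<otimes> v) = as x A u \<otimes> as x A v"
  using Lhom[OF x Z2_c[OF A] u v] A x u v by auto

lemma TS: assumes A: "A \<in> Z2" and y: "y \<in> carrier Q" and u: "u \<in> carrier Q"
  shows "as u y A = inv\<^bsub>ZGr\<^esub> (as A y u)"
proof -
  have "as u y A \<otimes> as A y u = \<one>" using Sym[OF Z2_c[OF A] y u Z2_assoc2[OF A y u]] .
  from ZG.inv_equality[OF this Z2_assoc2[OF A y u] Z2_assoc1[OF A u y]] show ?thesis by simp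
qed

lemma L1: assumes u: "u \<in> carrier Q" and v: "v \<in> carrier Q" and y: "y \<in> carrier Q" and A: "A \<in> Z2"
  shows "as (u \<otimes> v) y A = as u y A \<otimes> as v y A"
proof -
  have "as (u \<otimes> v) y A = inv\<^bsub>ZGr\<^esub> (as A y (u \<otimes> v))" using TS[OF A y closed[OF u v]] .
  also have "\<dots> = inv\<^bsub>ZGr\<^esub> (as A y u \<otimes> as A y v)" using H1[OF A y u v] by simp
  also have "\<dots> = inv\<^bsub>ZGr\<^esub> (as A y u) \<otimes> inv\<^bsub>ZGr\<^esub> (as A y v)" using ZG.inv_mult A y u v by auto
  also have "\<dots> = as u y A \<otimes> as v y A" using TS[OF A y u] TS[OF A y v] by simp
  finally show ?thesis .
qed

lemma L2: assumes x: "x \<in> carrier Q" and u: "u \<in> carrier Q" and v: "v \<in> carrier Q" and A: "A \<in> Z2"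
  shows "as x (u \<otimes> v) A = as x u A \<otimes> as x v A"
proof -
  have uv: "u \<otimes> v \<in> carrier Q" using u v by simp
  have "as x (u \<otimes> v) A = as x A (u \<otimes> v) \<otimes> as (u \<otimes> v) x A" using Mid[OF x uv A] by simp
  also have "\<dots> = (as x A u \<otimes> as x A v) \<otimes> (as u x A \<otimes> as v x A)" using H2[OF A x u v] L1[OF u v x A] by simp
  also have "\<dots> = (as x A u \<otimes> as u x A) \<otimes> (as x A v \<otimes> as v x A)"
    using A x u v by (simp add: ZG.m_ac Z2_assoc1 Z2_assoc3)
  also have "\<dots> = as x u A \<otimes> as x v A" using Mid[OF x u A] Mid[OF x v A] by simp
  finally show ?thesis .
qed

lemma kill: assumes hc: "\<And>u. u \<in> carrier Q \<Longrightarrow> h u \<in> NC"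
  and hm: "\<And>u v. u \<in> carrier Q \<Longrightarrow> v \<in> carrier Q \<Longrightarrow> h (u \<otimes> v) = h u \<otimes> h v"
  and p: "p \<in> carrier Q" and q: "q \<in> carrier Q" and r: "r \<in> carrier Q"
  shows "h (as p q r) = \<one>"
proof -
  have "h ((p \<otimes> q) \<otimes> r) = h (p \<otimes> (q \<otimes> r)) \<otimes> h (as p q r)"
    using hm[OF closed[OF p closed[OF q r]] assoc_closed[OF p q r]] assoc(2)[OF p q r] by simp
  also have "h (p \<otimes> (q \<otimes> r)) = (h p \<otimes> h q) \<otimes> h r"
    using hm p q r hc by (simp add: ZG.m_assoc)
  finally have "(h p \<otimes> h q) \<otimes> h r = ((h p \<otimes> h q) \<otimes> h r) \<otimes> h (as p q r)"
    using hm p q r by simp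
  then show ?thesis using hc p q r by simp
qed

lemma hom_one: assumes hc: "\<And>u. u \<in> carrier Q \<Longrightarrow> h u \<in> NC"
  and hm: "\<And>u v. u \<in> carrier Q \<Longrightarrow> v \<in> carrier Q \<Longrightarrow> h (u \<otimes> v) = h u \<otimes> h v"
  shows "h \<one> = \<one>"
proof -
  have "h \<one> = h \<one> \<otimes> h \<one>" using hm[of \<one> \<one>] by simp
  then show ?thesis using hc[of \<one>] by simp
qed

definition K where "K = {u \<in> Z2. \<forall>A\<in>Z2. \<forall>x\<in>carrier Q. as x u A = \<one> \<and> as u x A = \<one>}"

lemma K_Z2: "u \<in> K \<Longrightarrow> u \<in> Z2" unfolding K_def by blast
lemma K_c[simp]: "u \<in> K \<Longrightarrow> u \<in> carrier Q" using K_Z2 Z2_c by blast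
lemma K_k1: "u \<in> K \<Longrightarrow> A \<in> Z2 \<Longrightarrow> x \<in> carrier Q \<Longrightarrow> as x u A = \<one>" unfolding K_def by blast
lemma K_k2: "u \<in> K \<Longrightarrow> A \<in> Z2 \<Longrightarrow> x \<in> carrier Q \<Longrightarrow> as u x A = \<one>" unfolding K_def by blast
lemma K_k3: assumes u: "u \<in> K" and A: "A \<in> Z2" and x: "x \<in> carrier Q" shows "as A x u = \<one>"
proof -
  have "as u x A \<otimes> as A x u = \<one>" using Sym[OF Z2_c[OF A] x K_c[OF u] Z2_assoc2[OF A x K_c[OF u]]] .
  then show ?thesis using K_k2[OF u A x] A x u by simp
qed
lemma K_k4: assumes u: "u \<in> K" and A: "A \<in> Z2" and x: "x \<in> carrier Q" shows "as x A u = \<one>"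
proof -
  have "as x A u \<otimes> as u x A = as x u A" using Mid[OF x K_c[OF u] A] .
  then show ?thesis using K_k2[OF u A x] K_k1[OF u A x] A x u by simp
qed
lemma K_k5: assumes u: "u \<in> K" and A: "A \<in> Z2" and x: "x \<in> carrier Q" shows "as A u x = \<one>"
proof -
  have "as x u A \<otimes> as A u x = \<one>" using Sym[OF Z2_c[OF A] K_c[OF u] x Z2_assoc2[OF A K_c[OF u] x]] .
  then show ?thesis using K_k1[OF u A x] A x u by simp
qed
lemma K_k6: assumes u: "u \<in> K" and A: "A \<in> Z2" and x: "x \<in> carrier Q" shows "as u A x = \<one>"
proof -
  have "as u A x \<otimes> as x u A = as u x A" using Mid[OF K_c[OF u] x A] .
  then show ?thesis using K_k2[OF u A x] K_k1[OF u A x] A x u by simp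
qed

lemma assoc_K: assumes p: "p \<in> carrier Q" and q: "q \<in> carrier Q" and r: "r \<in> carrier Q"
  shows "as p q r \<in> K"
  unfolding K_def
proof (intro CollectI conjI ballI)
  show "as p q r \<in> Z2" using P1[OF p q r] .
  fix A x assume A: "A \<in> Z2" and x: "x \<in> carrier Q"
  show "as x (as p q r) A = \<one>"
    by (rule kill[where h = "\<lambda>u. as x u A"]) (use A x p q r L2 in auto)
  show "as (as p q r) x A = \<one>"
    by (rule kill[where h = "\<lambda>u. as u x A"]) (use A x p q r L1 in auto)
qed

lemma NC_K: assumes z: "z \<in> NC" shows "z \<in> K"
  unfolding K_def
proof (intro CollectI conjI ballI)
  show "z \<in> Z2" using QZ.N_Zq[OF z] .
  fix A x assume A: "A \<in> Z2" and x: "x \<in> carrier Q"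
  show "as x z A = \<one>" using NC_4[OF z x Z2_c[OF A]] assoc_one_iff[OF x NC_c[OF z] Z2_c[OF A]] by simp
  show "as z x A = \<one>" using NC_3[OF z x Z2_c[OF A]] assoc_one_iff[OF NC_c[OF z] x Z2_c[OF A]] by simp
qed

lemma K_mult: assumes u: "u \<in> K" and v: "v \<in> K" shows "u \<otimes> v \<in> K"
  unfolding K_def
proof (intro CollectI conjI ballI)
  show "u \<otimes> v \<in> Z2" using QZ.Zq_mult[OF K_Z2[OF u] K_Z2[OF v]] .
  fix A x assume A: "A \<in> Z2" and x: "x \<in> carrier Q"
  show "as x (u \<otimes> v) A = \<one>" using L2[OF x K_c[OF u] K_c[OF v] A] K_k1[OF u A x] K_k1[OF v A x] by simp
  show "as (u \<otimes> v) x A = \<one>" using L1[OF K_c[OF u] K_c[OF v] x A] K_k2[OF u A x] K_k2[OF v A x] by simp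
qed

lemma K_inv: assumes u: "u \<in> K" shows "ldiv u \<one> \<in> K" "ldiv u \<one> \<otimes> u = \<one>"
proof -
  have uc: "u \<in> carrier Q" using u by simp
  have i: "ldiv u \<one> \<in> carrier Q" "u \<otimes> ldiv u \<one> = \<one>" using ldiv[OF uc one_closed] by auto
  show e: "ldiv u \<one> \<otimes> u = \<one>" using i comm[OF uc i(1)] by simp
  show "ldiv u \<one> \<in> K" unfolding K_def
  proof (intro CollectI conjI ballI)
    show "ldiv u \<one> \<in> Z2" using QZ.Zq_inv[OF K_Z2[OF u] i] .
    fix A x assume A: "A \<in> Z2" and x: "x \<in> carrier Q"
    have "as x (ldiv u \<one> \<otimes> u) A = as x (ldiv u \<one>) A \<otimes> as x u A" using L2[OF x i(1) uc A] .
    moreover have "as x \<one> A = \<one>" using assoc_one_iff[OF x one_closed Z2_c[OF A]] x A by simp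
    ultimately show "as x (ldiv u \<one>) A = \<one>" using e K_k1[OF u A x] i x A by simp
    have "as (ldiv u \<one> \<otimes> u) x A = as (ldiv u \<one>) x A \<otimes> as u x A" using L1[OF i(1) uc x A] .
    moreover have "as \<one> x A = \<one>" using assoc_one_iff[OF one_closed x Z2_c[OF A]] x A by simp
    ultimately show "as (ldiv u \<one>) x A = \<one>" using e K_k2[OF u A x] i x A by simp
  qed
qed

definition KGr :: "'a monoid" where "KGr = \<lparr>carrier = K, mult = mult Q, one = one Q\<rparr>"

lemma KG_cg: "comm_group KGr"
proof (rule comm_groupI)
  fix x y z assume x: "x \<in> carrier KGr" and y: "y \<in> carrier KGr" and z: "z \<in> carrier KGr"
  then have x: "x \<in> K" and y: "y \<in> K" and z: "z \<in> K" by (auto simp: KGr_def)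
  show "x \<otimes>\<^bsub>KGr\<^esub> y \<in> carrier KGr" using K_mult[OF x y] by (simp add: KGr_def)
  have "as x y z = \<one>" using K_k1[OF y K_Z2[OF z] K_c[OF x]] .
  then show "x \<otimes>\<^bsub>KGr\<^esub> y \<otimes>\<^bsub>KGr\<^esub> z = x \<otimes>\<^bsub>KGr\<^esub> (y \<otimes>\<^bsub>KGr\<^esub> z)"
    using assoc_one_iff[OF K_c[OF x] K_c[OF y] K_c[OF z]] by (simp add: KGr_def)
  show "x \<otimes>\<^bsub>KGr\<^esub> y = y \<otimes>\<^bsub>KGr\<^esub> x" using comm[OF K_c[OF x] K_c[OF y]] by (simp add: KGr_def)
  show "\<one>\<^bsub>KGr\<^esub> \<otimes>\<^bsub>KGr\<^esub> x = x" using K_c[OF x] by (simp add: KGr_def)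
  show "\<exists>y\<in>carrier KGr. y \<otimes>\<^bsub>KGr\<^esub> x = \<one>\<^bsub>KGr\<^esub>" using K_inv[OF x] by (auto simp: KGr_def)
next
  show "\<one>\<^bsub>KGr\<^esub> \<in> carrier KGr" using NC_K[OF NC_one] by (simp add: KGr_def)
qed

interpretation KG: comm_group KGr
  rewrites "mult KGr = mult Q" and "carrier KGr = K" and "one KGr = one Q"
  by (rule KG_cg) (simp_all add: KGr_def)

lemma NC_Kc[simp]: "z \<in> NC \<Longrightarrow> z \<in> K" by (rule NC_K)
lemma a1K[simp]: "A \<in> Z2 \<Longrightarrow> x \<in> carrier Q \<Longrightarrow> y \<in> carrier Q \<Longrightarrow> as x y A \<in> K" using Z2_assoc1 NC_K by blast
lemma a2K[simp]: "A \<in> Z2 \<Longrightarrow> x \<in> carrier Q \<Longrightarrow> y \<in> carrier Q \<Longrightarrow> as A x y \<in> K" using Z2_assoc2 NC_K by blast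
lemma a3K[simp]: "A \<in> Z2 \<Longrightarrow> x \<in> carrier Q \<Longrightarrow> y \<in> carrier Q \<Longrightarrow> as x A y \<in> K" using Z2_assoc3 NC_K by blast


lemma Kz2[simp]: "u \<in> K \<Longrightarrow> u \<in> Z2" by (rule K_Z2)

lemma cz2: assumes z: "z \<in> NC" and p: "p \<in> carrier Q" and q: "q \<in> carrier Q"
  shows "(p \<otimes> z) \<otimes> q = (p \<otimes> q) \<otimes> z"
proof -
  have "(p \<otimes> z) \<otimes> q = p \<otimes> (z \<otimes> q)" using NC_4[OF z p q] .
  also have "z \<otimes> q = q \<otimes> z" using NC_1[OF z q] by simp
  also have "p \<otimes> (q \<otimes> z) = (p \<otimes> q) \<otimes> z" using NC_2[OF z p q] by simp
  finally show ?thesis .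
qed

lemma zmid: assumes z: "z \<in> NC" and p: "p \<in> carrier Q" and q: "q \<in> carrier Q"
  shows "as p z q = \<one>"
  using NC_4[OF z p q] assoc_one_iff[OF p NC_c[OF z] q] by simp

lemma zlast: assumes z: "z \<in> NC" and p: "p \<in> carrier Q" and q: "q \<in> carrier Q"
  shows "as p q z = \<one>"
  using NC_2[OF z p q] assoc_one_iff[OF p q NC_c[OF z]] by simp

lemma LM1: assumes u: "u \<in> carrier Q" and v: "v \<in> carrier Q" and q: "q \<in> carrier Q" and A: "A \<in> Z2"
  shows "as (u \<otimes> v) A q = as u A q \<otimes> as v A q"
proof -
  have uv: "u \<otimes> v \<in> carrier Q" using u v by simp
  have "as (u \<otimes> v) A q \<otimes> (as q u A \<otimes> as q v A) = as (u \<otimes> v) A q \<otimes> as q (u \<otimes> v) A"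
    using L2[OF q u v A] by simp
  also have "\<dots> = as (u \<otimes> v) q A" using Mid[OF uv q A] .
  also have "\<dots> = as u q A \<otimes> as v q A" using L1[OF u v q A] .
  also have "\<dots> = (as u A q \<otimes> as q u A) \<otimes> (as v A q \<otimes> as q v A)" using Mid[OF u q A] Mid[OF v q A] by simp
  also have "\<dots> = (as u A q \<otimes> as v A q) \<otimes> (as q u A \<otimes> as q v A)" using u v q A by (simp add: KG.m_ac)
  finally show ?thesis using u v q A uv by simp
qed

lemma LMA: assumes p: "p \<in> carrier Q" and q: "q \<in> carrier Q" and A: "A \<in> Z2" and B: "B \<in> Z2"
  shows "as p (A \<otimes> B) q = as p A q \<otimes> as p B q"
proof -
  have AB: "A \<otimes> B \<in> Z2" using QZ.Zq_mult[OF A B] .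
  have "as p (A \<otimes> B) q \<otimes> (as q p A \<otimes> as q p B) = as p (A \<otimes> B) q \<otimes> as q p (A \<otimes> B)"
    using L3[OF q p A B] by simp
  also have "\<dots> = as p q (A \<otimes> B)" using Mid[OF p q AB] .
  also have "\<dots> = as p q A \<otimes> as p q B" using L3[OF p q A B] .
  also have "\<dots> = (as p A q \<otimes> as q p A) \<otimes> (as p B q \<otimes> as q p B)" using Mid[OF p q A] Mid[OF p q B] by simp
  also have "\<dots> = (as p A q \<otimes> as p B q) \<otimes> (as q p A \<otimes> as q p B)" using p q A B by (simp add: KG.m_ac)
  finally show ?thesis using p q A B AB by simp
qed


lemma E1: assumes w: "w \<in> carrier Q" and m: "m \<in> carrier Q" and d: "d \<in> Z2"
  and fw: "fw \<in> carrier Q" and e: "m \<otimes> fw = (m \<otimes> w) \<otimes> d"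
  shows "fw \<otimes> as w d m = (w \<otimes> d) \<otimes> as w m d"
proof -
  have dc: "d \<in> carrier Q" using d by simp
  let ?R = "w \<otimes> (m \<otimes> d)" and ?a = "as w m d" and ?b = "as w d m"
  have a: "?a \<in> NC" and b: "?b \<in> NC" using d w m by auto
  have R: "?R \<in> carrier Q" using w m dc by simp
  have 1: "m \<otimes> fw = ?R \<otimes> ?a" using e comm[OF m w] assoc(2)[OF w m dc] by simp
  have 2: "(w \<otimes> d) \<otimes> m = ?R \<otimes> ?b" using assoc(2)[OF w dc m] comm[OF dc m] by simp
  have "m \<otimes> (fw \<otimes> ?b) = (m \<otimes> fw) \<otimes> ?b" using NC_2[OF b m fw] by simp
  also have "\<dots> = (?R \<otimes> ?a) \<otimes> ?b" using 1 by simp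
  also have "\<dots> = (?R \<otimes> ?b) \<otimes> ?a" using cz2[OF a R NC_c[OF b]] .
  also have "\<dots> = ((w \<otimes> d) \<otimes> m) \<otimes> ?a" using 2 by simp
  also have "\<dots> = ((w \<otimes> d) \<otimes> ?a) \<otimes> m" using cz2[OF a closed[OF w dc] m] by simp
  also have "\<dots> = m \<otimes> ((w \<otimes> d) \<otimes> ?a)" using comm[OF m closed[OF closed[OF w dc] NC_c[OF a]]] by simp
  finally show ?thesis using lcancel[OF m closed[OF fw NC_c[OF b]] closed[OF closed[OF w dc] NC_c[OF a]]] by simp
qed

lemma E2: assumes x: "x \<in> carrier Q" and y: "y \<in> carrier Q" and al: "al \<in> K" and be: "be \<in> K"
  shows "((x \<otimes> al) \<otimes> (y \<otimes> be)) \<otimes> (as x y be \<otimes> as x y al) = ((x \<otimes> y) \<otimes> (al \<otimes> be)) \<otimes> as x al y"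
proof -
  have alc: "al \<in> carrier Q" and bec: "be \<in> carrier Q" using al be by auto
  have alZ: "al \<in> Z2" and beZ: "be \<in> Z2" using al be by auto
  let ?R = "x \<otimes> (y \<otimes> al)" and ?c1 = "as x al y" and ?c2 = "as x y al" and ?c3 = "as x y be"
  have c1: "?c1 \<in> NC" and c2: "?c2 \<in> NC" and c3: "?c3 \<in> NC" using alZ beZ x y by auto
  have R: "?R \<in> carrier Q" using x y alc by simp
  have r1: "(x \<otimes> al) \<otimes> y = ?R \<otimes> ?c1" using assoc(2)[OF x alc y] comm[OF alc y] by simp
  have r2: "(x \<otimes> y) \<otimes> al = ?R \<otimes> ?c2" using assoc(2)[OF x y alc] by simp
  have a: "((x \<otimes> al) \<otimes> y) \<otimes> ?c2 = ((x \<otimes> y) \<otimes> al) \<otimes> ?c1"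
  proof -
    have "((x \<otimes> al) \<otimes> y) \<otimes> ?c2 = (?R \<otimes> ?c1) \<otimes> ?c2" using r1 by simp
    also have "\<dots> = (?R \<otimes> ?c2) \<otimes> ?c1" using cz2[OF c1 R NC_c[OF c2]] .
    also have "\<dots> = ((x \<otimes> y) \<otimes> al) \<otimes> ?c1" using r2 by simp
    finally show ?thesis .
  qed
  have b: "((x \<otimes> al) \<otimes> y) \<otimes> be = ((x \<otimes> al) \<otimes> (y \<otimes> be)) \<otimes> ?c3"
  proof -
    have "as (x \<otimes> al) y be = as x y be \<otimes> as al y be" using L1[OF x alc y beZ] .
    also have "as al y be = \<one>" using K_k2[OF al beZ y] .
    finally have "as (x \<otimes> al) y be = ?c3" using c3 by simp
    then show ?thesis using assoc(2)[OF closed[OF x alc] y bec] by simp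
  qed
  have c: "((x \<otimes> y) \<otimes> al) \<otimes> be = (x \<otimes> y) \<otimes> (al \<otimes> be)"
  proof -
    have "as (x \<otimes> y) al be = \<one>" using K_k1[OF al beZ closed[OF x y]] .
    then show ?thesis using assoc_one_iff[OF closed[OF x y] alc bec] by simp
  qed
  have "((x \<otimes> al) \<otimes> (y \<otimes> be)) \<otimes> (?c3 \<otimes> ?c2) = (((x \<otimes> al) \<otimes> (y \<otimes> be)) \<otimes> ?c3) \<otimes> ?c2"
    using NC_2[OF c2 closed[OF closed[OF x alc] closed[OF y bec]] NC_c[OF c3]] by simp
  also have "\<dots> = (((x \<otimes> al) \<otimes> y) \<otimes> be) \<otimes> ?c2" using b by simp
  also have "\<dots> = (((x \<otimes> al) \<otimes> y) \<otimes> ?c2) \<otimes> be" using cz2[OF c2 closed[OF closed[OF x alc] y] bec] by simp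
  also have "\<dots> = (((x \<otimes> y) \<otimes> al) \<otimes> ?c1) \<otimes> be" using a by simp
  also have "\<dots> = (((x \<otimes> y) \<otimes> al) \<otimes> be) \<otimes> ?c1" using cz2[OF c1 closed[OF closed[OF x y] alc] bec] .
  also have "\<dots> = ((x \<otimes> y) \<otimes> (al \<otimes> be)) \<otimes> ?c1" using c by simp
  finally show ?thesis .
qed


lemma PR: assumes A: "A \<in> Z2" and p: "p \<in> carrier Q" and q: "q \<in> carrier Q"
  shows "as A p q \<otimes> as p q A = as p A q"
proof -
  have s: "as A p q \<otimes> as q p A = \<one>" using Sym[OF q p Z2_c[OF A] Z2_assoc1[OF A q p]] .
  have "as A p q \<otimes> as p q A = as A p q \<otimes> (as p A q \<otimes> as q p A)" using Mid[OF p q A] by simp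
  also have "\<dots> = as p A q \<otimes> (as A p q \<otimes> as q p A)" using A p q by (simp add: KG.m_ac)
  also have "\<dots> = as p A q" using s A p q by simp
  finally show ?thesis .
qed

lemma PS: assumes A: "A \<in> Z2" and p: "p \<in> carrier Q" and q: "q \<in> carrier Q"
  shows "as A p q \<otimes> as q p A = \<one>"
  using Sym[OF q p Z2_c[OF A] Z2_assoc1[OF A q p]] .

lemma EM: assumes f: "f \<in> inn Q" and m: "m \<in> carrier Q"
  and D: "\<And>w. w \<in> carrier Q \<Longrightarrow> D w \<in> K"
  and De: "\<And>w. w \<in> carrier Q \<Longrightarrow> m \<otimes> f w = (m \<otimes> w) \<otimes> D w"
  and x: "x \<in> carrier Q" and y: "y \<in> carrier Q"
  shows "D (x \<otimes> y) = (D x \<otimes> D y) \<otimes> (((as (D x) x y \<otimes> as (D y) y x) \<otimes> as (D y) x m) \<otimes> as (D x) y m)"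
proof -
  define al where "al = D x"
  define be where "be = D y"
  define P where "P = x \<otimes> y"
  define ga where "ga = D P"
  have P: "P \<in> carrier Q" unfolding P_def using x y by simp
  have alK: "al \<in> K" and beK: "be \<in> K" and gaK: "ga \<in> K" unfolding al_def be_def ga_def using D x y P by auto
  have alZ: "al \<in> Z2" and beZ: "be \<in> Z2" and gaZ: "ga \<in> Z2" using alK beK gaK by auto
  have alc: "al \<in> carrier Q" and bec: "be \<in> carrier Q" and gac: "ga \<in> carrier Q" using alK beK gaK by auto
  have fc: "\<And>w. w \<in> carrier Q \<Longrightarrow> f w \<in> carrier Q" using inn_closed[OF f] .
  have e1x: "f x \<otimes> as x al m = (x \<otimes> al) \<otimes> as x m al"
    using E1[OF x m alZ fc[OF x]] De[OF x] unfolding al_def by simp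
  have e1y: "f y \<otimes> as y be m = (y \<otimes> be) \<otimes> as y m be"
    using E1[OF y m beZ fc[OF y]] De[OF y] unfolding be_def by simp
  have e1P: "f P \<otimes> as P ga m = (P \<otimes> ga) \<otimes> as P m ga"
    using E1[OF P m gaZ fc[OF P]] De[OF P] unfolding ga_def by simp
  have e2: "((x \<otimes> al) \<otimes> (y \<otimes> be)) \<otimes> (as x y be \<otimes> as x y al) = (P \<otimes> (al \<otimes> be)) \<otimes> as x al y"
    using E2[OF x y alK beK] unfolding P_def .
  have fP: "f P = f x \<otimes> f y" unfolding P_def using aut[OF f x y] .
  define ax where "ax = as x al m"
  define ay where "ay = as y be m"
  define bx where "bx = as x m al"
  define by' where "by' = as y m be"
  define c1 where "c1 = as x al y"
  define c2 where "c2 = as x y al"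
  define c3 where "c3 = as x y be"
  define g where "g = as P ga m"
  define h where "h = as P m ga"
  have NCs: "ax \<in> NC" "ay \<in> NC" "bx \<in> NC" "by' \<in> NC" "c1 \<in> NC" "c2 \<in> NC" "c3 \<in> NC" "g \<in> NC" "h \<in> NC"
    unfolding ax_def ay_def bx_def by'_def c1_def c2_def c3_def g_def h_def using alZ beZ gaZ x y m P by auto
  have NCc: "ax \<in> carrier Q" "ay \<in> carrier Q" "bx \<in> carrier Q" "by' \<in> carrier Q" "c1 \<in> carrier Q" "c2 \<in> carrier Q" "c3 \<in> carrier Q" "g \<in> carrier Q" "h \<in> carrier Q"
    using NCs NC_c by auto
  define W where "W = (ax \<otimes> ay) \<otimes> (c3 \<otimes> c2)"
  define X1 where "X1 = c1 \<otimes> (bx \<otimes> by')"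
  have WN: "W \<in> NC" and X1N: "X1 \<in> NC" unfolding W_def X1_def using NCs by (auto intro: NC_mult)
  have Wc: "W \<in> carrier Q" and X1c: "X1 \<in> carrier Q" using WN X1N NC_c by auto
  have xa: "x \<otimes> al \<in> carrier Q" and yb: "y \<otimes> be \<in> carrier Q" using x y alc bec by auto
  have stepI: "f P \<otimes> W = (P \<otimes> (al \<otimes> be)) \<otimes> X1"
  proof -
    have "f P \<otimes> (ax \<otimes> ay) = (f x \<otimes> ax) \<otimes> (f y \<otimes> ay)"
      using fP G3[OF fc[OF x] fc[OF y] NCs(1) NCs(2)] by simp
    also have "\<dots> = ((x \<otimes> al) \<otimes> bx) \<otimes> ((y \<otimes> be) \<otimes> by')" using e1x e1y unfolding ax_def ay_def bx_def by'_def by simp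
    also have "\<dots> = ((x \<otimes> al) \<otimes> (y \<otimes> be)) \<otimes> (bx \<otimes> by')" using G3[OF xa yb NCs(3) NCs(4)] .
    finally have 1: "f P \<otimes> (ax \<otimes> ay) = ((x \<otimes> al) \<otimes> (y \<otimes> be)) \<otimes> (bx \<otimes> by')" .
    have "f P \<otimes> W = (f P \<otimes> (ax \<otimes> ay)) \<otimes> (c3 \<otimes> c2)"
      unfolding W_def using NC_2[OF NC_mult[OF NCs(7) NCs(6)] fc[OF P] closed[OF NCc(1) NCc(2)]] by simp
    also have "\<dots> = (((x \<otimes> al) \<otimes> (y \<otimes> be)) \<otimes> (bx \<otimes> by')) \<otimes> (c3 \<otimes> c2)" using 1 by simp
    also have "\<dots> = (((x \<otimes> al) \<otimes> (y \<otimes> be)) \<otimes> (c3 \<otimes> c2)) \<otimes> (bx \<otimes> by')"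
      using cz2[OF NC_mult[OF NCs(3) NCs(4)] closed[OF xa yb] closed[OF NCc(7) NCc(6)]] .
    also have "\<dots> = ((P \<otimes> (al \<otimes> be)) \<otimes> c1) \<otimes> (bx \<otimes> by')" using e2 unfolding c1_def c2_def c3_def by simp
    also have "\<dots> = (P \<otimes> (al \<otimes> be)) \<otimes> X1"
      unfolding X1_def using NC_2[OF NC_mult[OF NCs(3) NCs(4)] closed[OF P closed[OF alc bec]] NCc(5)] by simp
    finally show ?thesis .
  qed
  have star: "(al \<otimes> be) \<otimes> (X1 \<otimes> g) = ga \<otimes> (h \<otimes> W)"
  proof -
    have "f P \<otimes> (W \<otimes> g) = (f P \<otimes> W) \<otimes> g" using NC_2[OF NCs(8) fc[OF P] Wc] by simp
    also have "\<dots> = ((P \<otimes> (al \<otimes> be)) \<otimes> X1) \<otimes> g" using stepI by simp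
    also have "\<dots> = (P \<otimes> (al \<otimes> be)) \<otimes> (X1 \<otimes> g)" using NC_2[OF NCs(8) closed[OF P closed[OF alc bec]] X1c] .
    also have "\<dots> = P \<otimes> ((al \<otimes> be) \<otimes> (X1 \<otimes> g))" using NC_2[OF NC_mult[OF X1N NCs(8)] P closed[OF alc bec]] .
    finally have L: "f P \<otimes> (W \<otimes> g) = P \<otimes> ((al \<otimes> be) \<otimes> (X1 \<otimes> g))" .
    have "f P \<otimes> (W \<otimes> g) = f P \<otimes> (g \<otimes> W)" using NC_1[OF WN NCc(8)] by simp
    also have "\<dots> = (f P \<otimes> g) \<otimes> W" using NC_2[OF WN fc[OF P] NCc(8)] by simp
    also have "\<dots> = ((P \<otimes> ga) \<otimes> h) \<otimes> W" using e1P unfolding g_def h_def by simp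
    also have "\<dots> = (P \<otimes> ga) \<otimes> (h \<otimes> W)" using NC_2[OF WN closed[OF P gac] NCc(9)] .
    also have "\<dots> = P \<otimes> (ga \<otimes> (h \<otimes> W))" using NC_2[OF NC_mult[OF NCs(9) WN] P gac] .
    finally have R: "f P \<otimes> (W \<otimes> g) = P \<otimes> (ga \<otimes> (h \<otimes> W))" .
    show ?thesis using L R lcancel[OF P] alc bec gac NCc Wc X1c by simp
  qed
  define Y where "Y = h \<otimes> W"
  have YN: "Y \<in> NC" unfolding Y_def using NC_mult[OF NCs(9) WN] .
  have Yc: "Y \<in> carrier Q" using YN NC_c by auto
  have iY: "ldiv Y \<one> \<in> carrier Q" "Y \<otimes> ldiv Y \<one> = \<one>" using ldiv[OF Yc one_closed] by auto
  have iYN: "ldiv Y \<one> \<in> NC" using NC_inv[OF YN iY] .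
  define ze where "ze = (X1 \<otimes> g) \<otimes> ldiv Y \<one>"
  have zeN: "ze \<in> NC" unfolding ze_def using NC_mult[OF NC_mult[OF X1N NCs(8)] iYN] .
  have zeZ: "ze \<in> Z2" using QZ.N_Zq[OF zeN] .
  have abK: "al \<otimes> be \<in> K" using K_mult[OF alK beK] .
  have abZ: "al \<otimes> be \<in> Z2" using abK by simp
  have gaE: "ga = (al \<otimes> be) \<otimes> ze"
  proof -
    have "ga = ga \<otimes> (Y \<otimes> ldiv Y \<one>)" using iY gac by simp
    also have "\<dots> = (ga \<otimes> Y) \<otimes> ldiv Y \<one>" using gaK YN iYN by (simp add: KG.m_assoc)
    also have "ga \<otimes> Y = (al \<otimes> be) \<otimes> (X1 \<otimes> g)" using star unfolding Y_def by simp
    also have "((al \<otimes> be) \<otimes> (X1 \<otimes> g)) \<otimes> ldiv Y \<one> = (al \<otimes> be) \<otimes> ze"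
      unfolding ze_def using abK X1N NCs iYN by (simp add: KG.m_assoc)
    finally show ?thesis .
  qed
  have gE: "g = (as x al m \<otimes> as y al m) \<otimes> (as x be m \<otimes> as y be m)"
  proof -
    have "g = as P (al \<otimes> be) m \<otimes> as P ze m" unfolding g_def gaE using LMA[OF P m abZ zeZ] .
    also have "as P ze m = \<one>" using zmid[OF zeN P m] .
    also have "as P (al \<otimes> be) m = as P al m \<otimes> as P be m" using LMA[OF P m alZ beZ] .
    also have "as P al m = as x al m \<otimes> as y al m" unfolding P_def using LM1[OF x y m alZ] .
    also have "as P be m = as x be m \<otimes> as y be m" unfolding P_def using LM1[OF x y m beZ] .
    finally show ?thesis using alZ beZ x y m by simp
  qed
  have hE: "h = (as x m al \<otimes> as y m al) \<otimes> (as x m be \<otimes> as y m be)"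
  proof -
    have "h = as P m (al \<otimes> be) \<otimes> as P m ze" unfolding h_def gaE using L3[OF P m abZ zeZ] .
    also have "as P m ze = \<one>" using zlast[OF zeN P m] .
    also have "as P m (al \<otimes> be) = as P m al \<otimes> as P m be" using L3[OF P m alZ beZ] .
    also have "as P m al = as x m al \<otimes> as y m al" unfolding P_def using L1[OF x y m alZ] .
    also have "as P m be = as x m be \<otimes> as y m be" unfolding P_def using L1[OF x y m beZ] .
    finally show ?thesis using alZ beZ x y m by simp
  qed
  define Tgt where "Tgt = (al \<otimes> be) \<otimes> (((as al x y \<otimes> as be y x) \<otimes> as be x m) \<otimes> as al y m)"
  have TgtK: "Tgt \<in> K" unfolding Tgt_def using alK beK alZ beZ x y m by (simp add: K_mult)
  have hWK: "h \<otimes> W \<in> K" using YN unfolding Y_def by simp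
  have "Tgt \<otimes> (h \<otimes> W) = (al \<otimes> be) \<otimes> ((as al x y \<otimes> as x y al) \<otimes> ((as be y x \<otimes> as x y be) \<otimes>
       ((as be x m \<otimes> as x m be) \<otimes> ((as al y m \<otimes> as y m al) \<otimes>
       (as x m al \<otimes> (as y m be \<otimes> (as x al m \<otimes> as y be m)))))))"
    unfolding Tgt_def hE W_def ax_def ay_def c2_def c3_def using alK beK alZ beZ x y m by (simp add: KG.m_ac)
  also have "\<dots> = (al \<otimes> be) \<otimes> (as x al y \<otimes> (\<one> \<otimes>
       (as x be m \<otimes> (as y al m \<otimes>
       (as x m al \<otimes> (as y m be \<otimes> (as x al m \<otimes> as y be m)))))))"
    by (simp only: PR[OF alZ x y] PS[OF beZ y x] PR[OF beZ x m] PR[OF alZ y m])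
  also have "\<dots> = (al \<otimes> be) \<otimes> (X1 \<otimes> g)"
    unfolding X1_def gE c1_def bx_def by'_def using alK beK alZ beZ x y m by (simp add: KG.m_ac)
  also have "\<dots> = ga \<otimes> (h \<otimes> W)" using star .
  finally have "Tgt \<otimes> (h \<otimes> W) = ga \<otimes> (h \<otimes> W)" .
  then have "ga = Tgt" using TgtK gaK hWK by simp
  then show ?thesis unfolding ga_def P_def Tgt_def al_def be_def .
qed


lemma FA: assumes A: "A \<in> Z2" and B: "B \<in> Z2" and p: "p \<in> carrier Q" and q: "q \<in> carrier Q"
  shows "as (A \<otimes> B) p q = as A p q \<otimes> as B p q"
proof -
  have AB: "A \<otimes> B \<in> Z2" using QZ.Zq_mult[OF A B] .
  have "as (A \<otimes> B) p q \<otimes> (as q p A \<otimes> as q p B) = as (A \<otimes> B) p q \<otimes> as q p (A \<otimes> B)"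
    using L3[OF q p A B] by simp
  also have "\<dots> = \<one>" using PS[OF AB p q] .
  also have "\<one> = (as A p q \<otimes> as q p A) \<otimes> (as B p q \<otimes> as q p B)" using PS[OF A p q] PS[OF B p q] by simp
  also have "\<dots> = (as A p q \<otimes> as B p q) \<otimes> (as q p A \<otimes> as q p B)" using A B p q by (simp add: KG.m_ac)
  finally show ?thesis using A B p q AB by simp
qed

lemma X3: assumes x: "x \<in> carrier Q" and y: "y \<in> carrier Q" and z: "z \<in> carrier Q"
  shows "as x y z = as x z y \<otimes> as y x z"
proof -
  let ?R = "x \<otimes> (y \<otimes> z)"
  have R: "?R \<in> carrier Q" using x y z by simp
  have u: "as x z y \<in> K" and v: "as y x z \<in> K" using assoc_K x y z by auto
  have "?R \<otimes> as x y z = (x \<otimes> y) \<otimes> z" using assoc(2)[OF x y z] .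
  also have "\<dots> = (y \<otimes> x) \<otimes> z" using comm[OF x y] by simp
  also have "\<dots> = (y \<otimes> (x \<otimes> z)) \<otimes> as y x z" using assoc(2)[OF y x z] by simp
  also have "y \<otimes> (x \<otimes> z) = (x \<otimes> z) \<otimes> y" using comm[OF y closed[OF x z]] .
  also have "(x \<otimes> z) \<otimes> y = ?R \<otimes> as x z y" using assoc(2)[OF x z y] comm[OF z y] by simp
  also have "(?R \<otimes> as x z y) \<otimes> as y x z = ?R \<otimes> (as x z y \<otimes> as y x z)"
  proof -
    have "as ?R (as x z y) (as y x z) = \<one>" using K_k1[OF u K_Z2[OF v] R] .
    then show ?thesis using assoc_one_iff[OF R K_c[OF u] K_c[OF v]] by simp
  qed
  finally show ?thesis using lcancel[OF R] u v x y z by simp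
qed

lemma Id1: assumes a: "a \<in> carrier Q" and b: "b \<in> carrier Q" and c: "c \<in> carrier Q" and d: "d \<in> carrier Q"
  shows "as (a \<otimes> b) c d =
      (((as a c d \<otimes> as b c d) \<otimes> as (as a c d) a b) \<otimes> as (as b c d) b a)
    \<otimes> (((as (as a c d) b c \<otimes> as (as b c d) a c) \<otimes> as (as a c d) b d) \<otimes> as (as b c d) a d)"
proof -
  obtain f where f: "f \<in> inn Q" and fv: "\<forall>u\<in>carrier Q. f u = ldiv (d \<otimes> c) (d \<otimes> (c \<otimes> u))"
    using inn_L[OF d c] by blast
  have De: "(c \<otimes> d) \<otimes> f w = ((c \<otimes> d) \<otimes> w) \<otimes> as w c d" if w: "w \<in> carrier Q" for w
  proof -
    have "(c \<otimes> d) \<otimes> f w = (d \<otimes> c) \<otimes> f w" using comm[OF c d] by simp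
    also have "\<dots> = d \<otimes> (c \<otimes> w)" using fv w ldiv(2)[OF closed[OF d c] closed[OF d closed[OF c w]]] by simp
    also have "\<dots> = (w \<otimes> c) \<otimes> d" using comm[OF d closed[OF c w]] comm[OF c w] by simp
    also have "\<dots> = (w \<otimes> (c \<otimes> d)) \<otimes> as w c d" using assoc(2)[OF w c d] by simp
    also have "w \<otimes> (c \<otimes> d) = (c \<otimes> d) \<otimes> w" using comm[OF w closed[OF c d]] .
    finally show ?thesis .
  qed
  have em: "as (a \<otimes> b) c d = (as a c d \<otimes> as b c d) \<otimes> (((as (as a c d) a b \<otimes> as (as b c d) b a)
     \<otimes> as (as b c d) a (c \<otimes> d)) \<otimes> as (as a c d) b (c \<otimes> d))"
    by (rule EM[OF f closed[OF c d], where D = "\<lambda>w. as w c d"]) (use assoc_K c d De a b in auto)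
  have AZ: "as a c d \<in> Z2" "as b c d \<in> Z2" using assoc_K a b c d by auto
  show ?thesis unfolding em H1[OF AZ(2) a c d] H1[OF AZ(1) b c d]
    using AZ a b c d assoc_K by (simp add: KG.m_ac)
qed


lemma Finv: assumes B: "B \<in> K" and p: "p \<in> carrier Q" and q: "q \<in> carrier Q"
  shows "as (inv\<^bsub>KGr\<^esub> B) p q = inv\<^bsub>KGr\<^esub> (as B p q)"
proof -
  have iB: "inv\<^bsub>KGr\<^esub> B \<in> K" using B by simp
  have "as (inv\<^bsub>KGr\<^esub> B \<otimes> B) p q = as (inv\<^bsub>KGr\<^esub> B) p q \<otimes> as B p q"
    using FA[OF K_Z2[OF iB] K_Z2[OF B] p q] .
  moreover have "inv\<^bsub>KGr\<^esub> B \<otimes> B = \<one>" using B by simp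
  moreover have "as \<one> p q = \<one>" using assoc_one_iff[OF one_closed p q] p q by simp
  ultimately have "as (inv\<^bsub>KGr\<^esub> B) p q \<otimes> as B p q = \<one>" by simp
  from KG.inv_equality[OF this] show ?thesis using B iB p q by simp
qed

lemma Id2: assumes a: "a \<in> carrier Q" and b: "b \<in> carrier Q" and c: "c \<in> carrier Q" and d: "d \<in> carrier Q"
  shows "as a b (c \<otimes> d) =
      (((as a b c \<otimes> as a b d) \<otimes> as (as a b c) c d) \<otimes> as (as a b d) d c)
    \<otimes> (((as (as a b c) d b \<otimes> as (as a b d) c b) \<otimes> as (as a b c) d a) \<otimes> as (as a b d) c a)"
proof -
  obtain f where f: "f \<in> inn Q" and fv: "\<forall>u\<in>carrier Q. f u = ldiv (a \<otimes> b) (a \<otimes> (b \<otimes> u))"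
    using inn_L[OF a b] by blast
  have De: "(a \<otimes> b) \<otimes> f w = ((a \<otimes> b) \<otimes> w) \<otimes> inv\<^bsub>KGr\<^esub> (as a b w)" if w: "w \<in> carrier Q" for w
  proof -
    let ?R = "a \<otimes> (b \<otimes> w)" and ?B = "as a b w"
    have R: "?R \<in> carrier Q" using a b w by simp
    have BK: "?B \<in> K" using assoc_K[OF a b w] .
    have iBK: "inv\<^bsub>KGr\<^esub> ?B \<in> K" using BK by simp
    have "(a \<otimes> b) \<otimes> f w = ?R" using fv w ldiv(2)[OF closed[OF a b] closed[OF a closed[OF b w]]] by simp
    also have "\<dots> = ?R \<otimes> (?B \<otimes> inv\<^bsub>KGr\<^esub> ?B)" using BK R by simp
    also have "\<dots> = (?R \<otimes> ?B) \<otimes> inv\<^bsub>KGr\<^esub> ?B"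
    proof -
      have "as ?R ?B (inv\<^bsub>KGr\<^esub> ?B) = \<one>" using K_k1[OF BK K_Z2[OF iBK] R] .
      then show ?thesis using assoc_one_iff[OF R K_c[OF BK] K_c[OF iBK]] by simp
    qed
    also have "?R \<otimes> ?B = (a \<otimes> b) \<otimes> w" using assoc(2)[OF a b w] .
    finally show ?thesis .
  qed
  have em: "inv\<^bsub>KGr\<^esub> (as a b (c \<otimes> d)) = (inv\<^bsub>KGr\<^esub> (as a b c) \<otimes> inv\<^bsub>KGr\<^esub> (as a b d)) \<otimes>
     (((as (inv\<^bsub>KGr\<^esub> (as a b c)) c d \<otimes> as (inv\<^bsub>KGr\<^esub> (as a b d)) d c)
     \<otimes> as (inv\<^bsub>KGr\<^esub> (as a b d)) c (a \<otimes> b)) \<otimes> as (inv\<^bsub>KGr\<^esub> (as a b c)) d (a \<otimes> b))"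
    by (rule EM[OF f closed[OF a b], where D = "\<lambda>w. inv\<^bsub>KGr\<^esub> (as a b w)"]) (use assoc_K a b De c d in auto)
  have AK: "as a b c \<in> K" "as a b d \<in> K" "as a b (c \<otimes> d) \<in> K" using assoc_K a b c d by auto
  have AZ: "as a b c \<in> Z2" "as a b d \<in> Z2" using AK by auto
  have "as a b (c \<otimes> d) = inv\<^bsub>KGr\<^esub> (inv\<^bsub>KGr\<^esub> (as a b (c \<otimes> d)))" using AK by simp
  also have "\<dots> = inv\<^bsub>KGr\<^esub> ((inv\<^bsub>KGr\<^esub> (as a b c) \<otimes> inv\<^bsub>KGr\<^esub> (as a b d)) \<otimes>
     (((inv\<^bsub>KGr\<^esub> (as (as a b c) c d) \<otimes> inv\<^bsub>KGr\<^esub> (as (as a b d) d c))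
     \<otimes> inv\<^bsub>KGr\<^esub> (as (as a b d) c a \<otimes> as (as a b d) c b)) \<otimes> inv\<^bsub>KGr\<^esub> (as (as a b c) d a \<otimes> as (as a b c) d b)))"
    unfolding em using Finv AK a b c d H1[OF AZ(2) c a b] H1[OF AZ(1) d a b] by simp
  also have "\<dots> = (((as a b c \<otimes> as a b d) \<otimes> as (as a b c) c d) \<otimes> as (as a b d) d c)
    \<otimes> (((as (as a b c) d b \<otimes> as (as a b d) c b) \<otimes> as (as a b c) d a) \<otimes> as (as a b d) c a)"
    using AK AZ a b c d by (simp add: KG.inv_mult KG.m_ac)
  finally show ?thesis .
qed

lemma Id3: assumes a: "a \<in> carrier Q" and b: "b \<in> carrier Q" and c: "c \<in> carrier Q" and d: "d \<in> carrier Q"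
  shows "as a (b \<otimes> c) d =
      (((as a b d \<otimes> as a c d) \<otimes> as (as a b d) b c) \<otimes> as (as a c d) c b)
    \<otimes> (((as (as a b d) c a \<otimes> as (as a c d) b a) \<otimes> as (as a b d) c d) \<otimes> as (as a c d) b d)"
proof -
  have K: "as a d b \<in> K" "as b a d \<in> K" "as a d c \<in> K" "as c a d \<in> K" using assoc_K a b c d by auto
  have Z: "as a d b \<in> Z2" "as b a d \<in> Z2" "as a d c \<in> Z2" "as c a d \<in> Z2" using K by auto
  have x1: "as a b d = as a d b \<otimes> as b a d" using X3[OF a b d] .
  have x2: "as a c d = as a d c \<otimes> as c a d" using X3[OF a c d] .
  have "as a (b \<otimes> c) d = as a d (b \<otimes> c) \<otimes> as (b \<otimes> c) a d" using X3[OF a closed[OF b c] d] .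
  also note Id2[OF a d b c]
  also note Id1[OF b c a d]
  finally show ?thesis unfolding x1 x2
    using FA[OF Z(1) Z(2) b c] FA[OF Z(3) Z(4) c b] FA[OF Z(1) Z(2) c a] FA[OF Z(3) Z(4) b a]
      FA[OF Z(1) Z(2) c d] FA[OF Z(3) Z(4) b d] K Z a b c d by (simp add: KG.m_ac)
qed

end

theorem proposition2p8:
  fixes Q :: "('a, 'b) monoid_scheme"
  assumes "commutative_loop Q"
    and "automorphic_loop Q"
    and "nilpotency_class Q 3"
    and "a \<in> carrier Q" and "b \<in> carrier Q" and "c \<in> carrier Q" and "d \<in> carrier Q"
  shows
   "(associator Q (a \<otimes>\<^bsub>Q\<^esub> b) c d =
      (((associator Q a c d \<otimes>\<^bsub>Q\<^esub> associator Q b c d)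
         \<otimes>\<^bsub>Q\<^esub> associator Q (associator Q a c d) a b)
         \<otimes>\<^bsub>Q\<^esub> associator Q (associator Q b c d) b a)
    \<otimes>\<^bsub>Q\<^esub>
      (((associator Q (associator Q a c d) b c \<otimes>\<^bsub>Q\<^esub> associator Q (associator Q b c d) a c)
         \<otimes>\<^bsub>Q\<^esub> associator Q (associator Q a c d) b d)
         \<otimes>\<^bsub>Q\<^esub> associator Q (associator Q b c d) a d)) \<and>
   (associator Q a b (c \<otimes>\<^bsub>Q\<^esub> d) =
      (((associator Q a b c \<otimes>\<^bsub>Q\<^esub> associator Q a b d)
         \<otimes>\<^bsub>Q\<^esub> associator Q (associator Q a b c) c d)
         \<otimes>\<^bsub>Q\<^esub> associator Q (associator Q a b d) d c)
    \<otimes>\<^bsub>Q\<^esub>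
      (((associator Q (associator Q a b c) d b \<otimes>\<^bsub>Q\<^esub> associator Q (associator Q a b d) c b)
         \<otimes>\<^bsub>Q\<^esub> associator Q (associator Q a b c) d a)
         \<otimes>\<^bsub>Q\<^esub> associator Q (associator Q a b d) c a)) \<and>
   (associator Q a (b \<otimes>\<^bsub>Q\<^esub> c) d =
      (((associator Q a b d \<otimes>\<^bsub>Q\<^esub> associator Q a c d)
         \<otimes>\<^bsub>Q\<^esub> associator Q (associator Q a b d) b c)
         \<otimes>\<^bsub>Q\<^esub> associator Q (associator Q a c d) c b)
    \<otimes>\<^bsub>Q\<^esub>
      (((associator Q (associator Q a b d) c a \<otimes>\<^bsub>Q\<^esub> associator Q (associator Q a c d) b a)
         \<otimes>\<^bsub>Q\<^esub> associator Q (associator Q a b d) c d)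
         \<otimes>\<^bsub>Q\<^esub> associator Q (associator Q a c d) b d))"
proof -
  have L: "loop Q" and cm: "\<And>x y. x \<in> carrier Q \<Longrightarrow> y \<in> carrier Q \<Longrightarrow> x \<otimes>\<^bsub>Q\<^esub> y = y \<otimes>\<^bsub>Q\<^esub> x"
    using assms(1) unfolding commutative_loop_def by auto
  have au: "\<And>f x y. f \<in> inn Q \<Longrightarrow> x \<in> carrier Q \<Longrightarrow> y \<in> carrier Q \<Longrightarrow> f (x \<otimes>\<^bsub>Q\<^esub> y) = f x \<otimes>\<^bsub>Q\<^esub> f y"
    using assms(2) unfolding automorphic_loop_def by blast
  have nl: "upper_center Q 3 = carrier Q" using assms(3) unfolding nilpotency_class_def by blast
  interpret cal Q
    by (rule cal.intro, rule lp.intro, rule L, rule cal_axioms.intro) (use cm au nl in auto)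
  show ?thesis using Id1[OF assms(4-7)] Id2[OF assms(4-7)] Id3[OF assms(4-7)] by blast
qed

end
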